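(* Let $a>0$, let $q\in C^{1}[-a,a]$ be complex-valued, and let $f\in C^{2}[-a,a]$ be a solution of $f''-qf=0$ with $f(x)\neq0$ for all $x\in[-a,a]$ and $f(0)=1$; put $h:=f'(0)$. Let $K(x,t)$ be the solution of the Goursat problem $\big(\partial_x^{2}-q(x)\big)K=\partial_t^{2}K$, $K(x,x)=\frac12\int_0^x q(s)\,ds$, $K(x,-x)=0$, let $$\mathbf{K}(x,t;h)=\frac{h}{2}+K(x,t)+\frac{h}{2}\int_{t}^{x}\big(K(x,s)-K(x,-s)\big)\,ds,$$ and $\mathbf{T}u(x)=u(x)+\int_{-x}^{x}\mathbf{K}(x,t;h)u(t)\,dt$. Let $\{\varphi_k\}$ be the functions built from $f$ with base point $x_0=0$ (see context). Then $\mathbf{T}[x^k]=\varphi_k$ for every $k\in\mathbb{N}_0$, and $$\Big(-\frac{d^{2}}{dx^{2}}+q(x)\Big)\mathbf{T}[u]=\mathbf{T}\Big[-\frac{d^{2}u}{dx^{2}}\Big]\qquad\text{for every }u\in C^{2}[-a,a].$$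
   Context: Given a nonvanishing $f\in C^2$ on an interval containing $x_0$, define $\widetilde{X}^{(0)}\equiv X^{(0)}\equiv1$ and for $n\ge1$: $\widetilde{X}^{(n)}(x)=n\int_{x_0}^{x}\widetilde{X}^{(n-1)}(s)(f^{2}(s))^{(-1)^{n-1}}ds$, $X^{(n)}(x)=n\int_{x_0}^{x}X^{(n-1)}(s)(f^{2}(s))^{(-1)^{n}}ds$; set $\varphi_k=fX^{(k)}$ for odd $k$ and $\varphi_k=f\widetilde{X}^{(k)}$ for even $k$. *)

theory Defs
  imports "HOL-Analysis.Analysis"
begin

definition dint :: "real \<Rightarrow> real \<Rightarrow> (real \<Rightarrow> complex) \<Rightarrow> complex" where
  "dint a b g = (if a \<le> b then integral {a..b} g else - integral {b..a} g)"

fun Xt :: "(real \<Rightarrow> complex) \<Rightarrow> real \<Rightarrow> nat \<Rightarrow> real \<Rightarrow> complex" where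
  "Xt f x0 0 x = 1"
| "Xt f x0 (Suc n) x = of_nat (Suc n) *
     dint x0 x (\<lambda>s. Xt f x0 n s * (if even n then (f s)^2 else inverse ((f s)^2)))"

fun X :: "(real \<Rightarrow> complex) \<Rightarrow> real \<Rightarrow> nat \<Rightarrow> real \<Rightarrow> complex" where
  "X f x0 0 x = 1"
| "X f x0 (Suc n) x = of_nat (Suc n) *
     dint x0 x (\<lambda>s. X f x0 n s * (if even n then inverse ((f s)^2) else (f s)^2))"

definition phi :: "(real \<Rightarrow> complex) \<Rightarrow> real \<Rightarrow> nat \<Rightarrow> real \<Rightarrow> complex" where
  "phi f x0 k x = f x * (if odd k then X f x0 k x else Xt f x0 k x)"

definition Omega :: "real \<Rightarrow> (real \<times> real) set" where
  "Omega a = {(x, t). \<bar>t\<bar> \<le> \<bar>x\<bar> \<and> \<bar>x\<bar> \<le> a}"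

definition bK :: "(real \<Rightarrow> real \<Rightarrow> complex) \<Rightarrow> complex \<Rightarrow> real \<Rightarrow> real \<Rightarrow> complex" where
  "bK K h x t = h / 2 + K x t + h / 2 * dint t x (\<lambda>s. K x s - K x (- s))"

definition bT :: "(real \<Rightarrow> real \<Rightarrow> complex) \<Rightarrow> complex \<Rightarrow> (real \<Rightarrow> complex) \<Rightarrow> real \<Rightarrow> complex" where
  "bT K h u x = u x + dint (- x) x (\<lambda>t. bK K h x t * u t)"

end

theory Submission
  imports Defs
begin


lemma dint_same[simp]: "dint a a g = 0" by (simp add: dint_def)

lemma dint_swap: "dint a b g = - dint b a g"
  by (cases "a = b") (auto simp: dint_def)

lemma dint_le: "a \<le> b \<Longrightarrow> dint a b g = integral {a..b} g"
  by (simp add: dint_def)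

lemma dint_split:
  fixes g :: "real \<Rightarrow> complex"
  assumes "c \<le> a" "c \<le> b" "g integrable_on {c..max a b}"
  shows "dint a b g = integral {c..b} g - integral {c..a} g"
proof (cases "a \<le> b")
  case True
  have "integral {c..a} g + integral {a..b} g = integral {c..b} g"
    by (rule Henstock_Kurzweil_Integration.integral_combine) (use assms True in \<open>auto intro: integrable_on_subinterval[OF assms(3)]\<close>)
  then show ?thesis using True by (simp add: dint_def algebra_simps)
next
  case False
  have "integral {c..b} g + integral {b..a} g = integral {c..a} g"
    by (rule Henstock_Kurzweil_Integration.integral_combine) (use assms False in \<open>auto intro: integrable_on_subinterval[OF assms(3)]\<close>)
  then show ?thesis using False by (simp add: dint_def algebra_simps)
qed

lemma dint_cong:
  assumes "\<And>t. t \<in> {min a b..max a b} \<Longrightarrow> g t = g' t"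
  shows "dint a b g = dint a b g'"
  unfolding dint_def using assms by (auto intro!: integral_cong)

lemma dint_deriv:
  fixes g :: "real \<Rightarrow> complex"
  assumes "continuous_on {lo..hi} g" "x0 \<in> {lo..hi}" "x \<in> {lo..hi}"
  shows "((\<lambda>x. dint x0 x g) has_vector_derivative g x) (at x within {lo..hi})"
proof -
  have int: "g integrable_on {lo..hi}" using assms(1) by (rule integrable_continuous_real)
  have eq: "dint x0 y g = integral {lo..y} g - integral {lo..x0} g" if "y \<in> {lo..hi}" for y
    using assms that by (intro dint_split) (auto intro!: integrable_on_subinterval[OF int])
  have "((\<lambda>y. integral {lo..y} g - integral {lo..x0} g) has_vector_derivative g x - 0) (at x within {lo..hi})"
    by (intro derivative_intros integral_has_vector_derivative assms)
  then have "((\<lambda>y. integral {lo..y} g - integral {lo..x0} g) has_vector_derivative g x) (at x within {lo..hi})"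
    by simp
  then show ?thesis
    by (rule has_vector_derivative_transform_within[where d=1]) (use eq assms in auto)
qed

lemma dint_integrable_le:
  fixes g :: "real \<Rightarrow> complex"
  assumes "continuous_on {min a b..max a b} g"
  shows "g integrable_on {min a b..max a b}"
  using assms by (rule integrable_continuous_real)

lemma dint_add:
  fixes g g' :: "real \<Rightarrow> complex"
  assumes "continuous_on {min a b..max a b} g" "continuous_on {min a b..max a b} g'"
  shows "dint a b (\<lambda>t. g t + g' t) = dint a b g + dint a b g'"
proof -
  have "g integrable_on {min a b..max a b}" "g' integrable_on {min a b..max a b}"
    using assms by (auto intro: integrable_continuous_real)
  then show ?thesis unfolding dint_def
    by (cases "a \<le> b") (auto simp: integral_add min_def max_def)
qed

lemma dint_diff:
  fixes g g' :: "real \<Rightarrow> complex"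
  assumes "continuous_on {min a b..max a b} g" "continuous_on {min a b..max a b} g'"
  shows "dint a b (\<lambda>t. g t - g' t) = dint a b g - dint a b g'"
proof -
  have "g integrable_on {min a b..max a b}" "g' integrable_on {min a b..max a b}"
    using assms by (auto intro: integrable_continuous_real)
  then show ?thesis unfolding dint_def
    by (cases "a \<le> b") (auto simp: integral_diff min_def max_def)
qed

lemma dint_cmult: "dint a b (\<lambda>t. c * g t) = c * dint a b (g :: real \<Rightarrow> complex)"
  unfolding dint_def by (auto simp: integral_mult_right)

lemma dint_multc: "dint a b (\<lambda>t. g t * c) = dint a b (g :: real \<Rightarrow> complex) * c"
  unfolding dint_def by (auto simp: integral_mult_left)

lemma dint_neg: "dint a b (\<lambda>t. - g t) = - dint a b (g :: real \<Rightarrow> complex)"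
  unfolding dint_def by (auto simp: integral_neg)

lemma dint_reflect: "dint (-x) x (\<lambda>t. g (-t)) = dint (-x) x (g :: real \<Rightarrow> complex)"
proof (cases "-x \<le> x")
  case True
  then show ?thesis unfolding dint_def
    using Henstock_Kurzweil_Integration.integral_reflect_real[of x "-x" g] by simp
next
  case False
  then show ?thesis unfolding dint_def
    using Henstock_Kurzweil_Integration.integral_reflect_real[of "-x" x g] by simp
qed

lemma dint_odd:
  assumes "\<And>t. g (-t) = - g t"
  shows "dint (-x) x (g :: real \<Rightarrow> complex) = 0"
proof -
  have "dint (-x) x g = dint (-x) x (\<lambda>t. g (-t))" by (rule dint_reflect[symmetric])
  also have "\<dots> = - dint (-x) x g" using assms by (simp add: dint_neg)
  finally show ?thesis by simp
qed

lemma dint_FTC: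
  fixes F F' :: "real \<Rightarrow> complex"
  assumes "\<And>x. x \<in> {min a b..max a b} \<Longrightarrow> (F has_vector_derivative F' x) (at x within {min a b..max a b})"
  shows "dint a b F' = F b - F a"
proof (cases "a \<le> b")
  case True
  have "(F' has_integral F b - F a) {a..b}"
    by (rule fundamental_theorem_of_calculus) (use True assms in \<open>auto simp: min_def max_def\<close>)
  then show ?thesis using True by (simp add: dint_def integral_unique)
next
  case False
  have "(F' has_integral F a - F b) {b..a}"
    by (rule fundamental_theorem_of_calculus) (use False assms in \<open>auto simp: min_def max_def\<close>)
  then show ?thesis using False by (simp add: dint_def integral_unique)
qed

lemma dint_scale:
  fixes g :: "real \<Rightarrow> complex"
  assumes "continuous_on {-\<bar>y\<bar>..\<bar>y\<bar>} g"
  shows "dint (-y) y g = of_real y * integral {-1..1} (\<lambda>s. g (y * s))"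
proof -
  have key: "integral {-m..m} g = of_real m * integral {-1..1} (\<lambda>s. g (m * s))"
    if m: "m > 0" "continuous_on {-m..m} g" for m and g :: "real \<Rightarrow> complex"
  proof -
    have "(g has_integral integral {-m..m} g) (cbox (-m) m)"
      using m by (auto intro!: integrable_integral integrable_continuous_real)
    from has_integral_affinity'[OF this m(1), of 0]
    have "((\<lambda>s. g (m * s)) has_integral integral {-m..m} g /\<^sub>R m) {-1..1}"
      using m by simp
    then have "integral {-1..1} (\<lambda>s. g (m * s)) = integral {-m..m} g /\<^sub>R m"
      by (rule integral_unique)
    then show ?thesis using m
      by (simp add: scaleR_conv_of_real field_simps)
  qed
  consider "y = 0" | "y > 0" | "y < 0" by linarith
  then show ?thesis
  proof cases
    case 1 then show ?thesis by simp
  next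
    case 2 then show ?thesis using key[of y g] assms by (simp add: dint_def)
  next
    case 3
    have "dint (-y) y g = - integral {y..-y} g" using 3 by (simp add: dint_def)
    also have "integral {y..-y} g = integral {-(-y)..-y} g" by simp
    also have "\<dots> = of_real (-y) * integral {-1..1} (\<lambda>s. g (-y * s))"
      using key[of "-y" g] assms 3 by simp
    also have "integral {-1..1} (\<lambda>s. g (-y * s)) = integral {-1..1} (\<lambda>s. g (y * s))"
    proof -
      have "integral {- 1..- (- 1)} (\<lambda>s. (\<lambda>s. g (y * s)) (- s)) = integral {- 1..1} (\<lambda>s. g (y * s))"
        by (rule Henstock_Kurzweil_Integration.integral_reflect_real)
      moreover have "(\<lambda>s. (\<lambda>s. g (y * s)) (- s)) = (\<lambda>s. g (- y * s))" by auto
      ultimately show ?thesis by simp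
    qed
    finally show ?thesis by simp
  qed
qed




lemma seg_bound:
  fixes f f' :: "real \<Rightarrow> complex"
  assumes d: "\<And>y. y \<in> closed_segment a b \<Longrightarrow> (f has_vector_derivative f' y) (at y within closed_segment a b)"
    and B: "\<And>y. y \<in> closed_segment a b \<Longrightarrow> norm (f' y - c) \<le> B"
  shows "norm (f b - f a - (b - a) *\<^sub>R c) \<le> B * \<bar>b - a\<bar>"
proof -
  have "norm ((\<lambda>y. f y - y *\<^sub>R c) b - (\<lambda>y. f y - y *\<^sub>R c) a) \<le> B * norm (b - a)"
  proof (rule differentiable_bound[where f'="\<lambda>y h. h *\<^sub>R (f' y - c)"])
    show "convex (closed_segment a b)" by simp
    fix y assume y: "y \<in> closed_segment a b"
    have "((\<lambda>y. f y - y *\<^sub>R c) has_vector_derivative (f' y - 1 *\<^sub>R c)) (at y within closed_segment a b)"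
    proof -
      have "((\<lambda>x. x *\<^sub>R c) has_vector_derivative 1 *\<^sub>R c) (at y within closed_segment a b)"
        by (auto simp: has_vector_derivative_def intro!: derivative_eq_intros)
      then show ?thesis by (intro derivative_intros d y)
    qed
    then show "((\<lambda>y. f y - y *\<^sub>R c) has_derivative (\<lambda>h. h *\<^sub>R (f' y - c))) (at y within closed_segment a b)"
      by (simp add: has_vector_derivative_def)
    have "onorm (\<lambda>h. h *\<^sub>R (f' y - c)) = onorm (\<lambda>h::real. h) * norm (f' y - c)"
      by (rule onorm_scaleR_left) (rule bounded_linear_ident)
    also have "\<dots> = norm (f' y - c)" by (simp add: onorm_id)
    finally show "onorm (\<lambda>h. h *\<^sub>R (f' y - c)) \<le> B" using B[OF y] by simp
  qed auto
  then show ?thesis by (simp add: algebra_simps)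
qed

lemma Omega_iff: "(x, t) \<in> Omega a \<longleftrightarrow> \<bar>t\<bar> \<le> \<bar>x\<bar> \<and> \<bar>x\<bar> \<le> a"
  by (simp add: Omega_def)

lemma pair_dist_mono:
  fixes x t x0 t0 y s :: real
  assumes "\<bar>y - x0\<bar> \<le> \<bar>x - x0\<bar>" "\<bar>s - t0\<bar> \<le> \<bar>t - t0\<bar>"
  shows "dist (y, s) (x0, t0) \<le> dist (x, t) (x0, t0)"
proof -
  have "(dist y x0)\<^sup>2 + (dist s t0)\<^sup>2 \<le> (dist x x0)\<^sup>2 + (dist t t0)\<^sup>2"
    using assms by (intro add_mono power_mono) (auto simp: dist_real_def)
  then show ?thesis by (simp add: dist_Pair_Pair real_sqrt_le_mono)
qed

lemma pair_dist_ge: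
  fixes x t x0 t0 :: real
  shows "\<bar>x - x0\<bar> \<le> dist (x, t) (x0, t0)" "\<bar>t - t0\<bar> \<le> dist (x, t) (x0, t0)"
proof -
  have "\<bar>x - x0\<bar> = dist (x, t0) (x0, t0)" by (simp add: dist_Pair_Pair dist_real_def)
  also have "\<dots> \<le> dist (x, t) (x0, t0)" by (rule pair_dist_mono) auto
  finally show "\<bar>x - x0\<bar> \<le> dist (x, t) (x0, t0)" .
  have "\<bar>t - t0\<bar> = dist (x0, t) (x0, t0)" by (simp add: dist_Pair_Pair dist_real_def)
  also have "\<dots> \<le> dist (x, t) (x0, t0)" by (rule pair_dist_mono) auto
  finally show "\<bar>t - t0\<bar> \<le> dist (x, t) (x0, t0)" .
qed

lemma seg_mem: "y \<in> closed_segment a b \<Longrightarrow> min a b \<le> y \<and> y \<le> max a (b::real)"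
  by (auto simp: closed_segment_eq_real_ivl split: if_splits)

lemma memA1: "x0 = 0 \<or> \<bar>x-x0\<bar> < \<bar>x0\<bar> \<Longrightarrow> \<bar>x0\<bar> \<le> \<bar>x\<bar> \<Longrightarrow> \<bar>t0\<bar> \<le> \<bar>x0\<bar> \<Longrightarrow> \<bar>x\<bar> \<le> a
  \<Longrightarrow> min x0 x \<le> y \<Longrightarrow> y \<le> max x0 x \<Longrightarrow> \<bar>t0\<bar> \<le> \<bar>y\<bar> \<and> \<bar>y\<bar> \<le> (a::real)"
  by (auto simp: abs_if min_def max_def split: if_splits)
lemma memA2: "\<bar>t0\<bar> \<le> \<bar>x0\<bar> \<Longrightarrow> \<bar>x0\<bar> \<le> \<bar>x\<bar> \<Longrightarrow> \<bar>t\<bar> \<le> \<bar>x\<bar>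
  \<Longrightarrow> min t0 t \<le> s \<Longrightarrow> s \<le> max t0 t \<Longrightarrow> \<bar>s\<bar> \<le> \<bar>x::real\<bar>"
  by (auto simp: abs_if min_def max_def split: if_splits)
lemma memB1: "\<bar>t\<bar> \<le> \<bar>x\<bar> \<Longrightarrow> \<bar>x\<bar> < \<bar>x0\<bar> \<Longrightarrow> \<bar>t0\<bar> \<le> \<bar>x0\<bar>
  \<Longrightarrow> min t0 t \<le> s \<Longrightarrow> s \<le> max t0 t \<Longrightarrow> \<bar>s\<bar> \<le> \<bar>x0::real\<bar>"
  by (auto simp: abs_if min_def max_def split: if_splits)
lemma memB2: "\<bar>x-x0\<bar> < \<bar>x0\<bar> \<Longrightarrow> \<bar>x\<bar> < \<bar>x0\<bar> \<Longrightarrow> \<bar>t\<bar> \<le> \<bar>x\<bar> \<Longrightarrow> \<bar>x0\<bar> \<le> a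
  \<Longrightarrow> min x0 x \<le> y \<Longrightarrow> y \<le> max x0 x \<Longrightarrow> \<bar>t\<bar> \<le> \<bar>y\<bar> \<and> \<bar>y\<bar> \<le> (a::real)"
  by (auto simp: abs_if min_def max_def split: if_splits)
lemma seg_abs: "y \<in> closed_segment a b \<Longrightarrow> \<bar>y - a\<bar> \<le> \<bar>b - (a::real)\<bar>"
  by (auto simp: closed_segment_eq_real_ivl split: if_splits)

lemma cone_diff:
  fixes F Fx Ft :: "real \<Rightarrow> real \<Rightarrow> complex"
  assumes Fx: "\<And>x t. (x,t) \<in> Omega a \<Longrightarrow> ((\<lambda>y. F y t) has_vector_derivative Fx x t) (at x within {y. (y,t)\<in>Omega a})"
  and Ft: "\<And>x t. (x,t) \<in> Omega a \<Longrightarrow> ((\<lambda>s. F x s) has_vector_derivative Ft x t) (at t within {s. (x,s)\<in>Omega a})"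
  and cx: "continuous_on (Omega a) (\<lambda>p. Fx (fst p) (snd p))"
  and ct: "continuous_on (Omega a) (\<lambda>p. Ft (fst p) (snd p))"
  and p0: "(x0,t0) \<in> Omega a"
  shows "((\<lambda>p. F (fst p) (snd p)) has_derivative (\<lambda>d. fst d *\<^sub>R Fx x0 t0 + snd d *\<^sub>R Ft x0 t0)) (at (x0,t0) within Omega a)"
  unfolding has_derivative_within_alt
proof (intro conjI allI impI)
  show "bounded_linear (\<lambda>d. fst d *\<^sub>R Fx x0 t0 + snd d *\<^sub>R Ft x0 t0)"
    by (auto intro!: bounded_linear_intros)
  fix e :: real assume e: "e > 0"
  define e2 where "e2 = e/2"
  have e2: "e2 > 0" using e by (simp add: e2_def)
  obtain d1 where d1: "d1>0" "\<And>p. p \<in> Omega a \<Longrightarrow> dist p (x0,t0) < d1 \<Longrightarrow> dist (Fx (fst p) (snd p)) (Fx x0 t0) < e2"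
    using cx p0 e2 unfolding continuous_on_iff by (metis fst_conv snd_conv)
  obtain d2 where d2: "d2>0" "\<And>p. p \<in> Omega a \<Longrightarrow> dist p (x0,t0) < d2 \<Longrightarrow> dist (Ft (fst p) (snd p)) (Ft x0 t0) < e2"
    using ct p0 e2 unfolding continuous_on_iff by (metis fst_conv snd_conv)
  define d where "d = (if x0 = 0 then min d1 d2 else min (min d1 d2) \<bar>x0\<bar>)"
  have dpos: "d > 0" using d1 d2 by (auto simp: d_def)
  have p0': "\<bar>t0\<bar> \<le> \<bar>x0\<bar>" "\<bar>x0\<bar> \<le> a" using p0 by (auto simp: Omega_iff)
  show "\<exists>d>0. \<forall>y\<in>Omega a. norm (y - (x0,t0)) < d \<longrightarrow> norm (F (fst y) (snd y) - F (fst (x0,t0)) (snd (x0,t0))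
     - (fst (y - (x0,t0)) *\<^sub>R Fx x0 t0 + snd (y - (x0, t0)) *\<^sub>R Ft x0 t0)) \<le> e * norm (y - (x0,t0))"
  proof (intro exI[of _ d] conjI ballI impI dpos)
    fix p assume p: "p \<in> Omega a" "norm (p - (x0,t0)) < d"
    obtain x t where pxt: "p = (x,t)" by (cases p)
    let ?D = "dist (x,t) (x0,t0)"
    have nd: "norm (p - (x0,t0)) = ?D" by (simp add: pxt dist_norm)
    have pp: "\<bar>t\<bar> \<le> \<bar>x\<bar>" "\<bar>x\<bar> \<le> a" using p pxt by (auto simp: Omega_iff)
    have Dd: "?D < d" using p nd by simp
    have dx: "\<bar>x - x0\<bar> \<le> ?D" and dt: "\<bar>t - t0\<bar> \<le> ?D" by (rule pair_dist_ge)+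
    have sgn: "x0 = 0 \<or> \<bar>x - x0\<bar> < \<bar>x0\<bar>" using dx Dd by (auto simp: d_def split: if_splits)
    have Dd1: "?D < d1" and Dd2: "?D < d2" using Dd by (auto simp: d_def split: if_splits)
    have bx: "norm (Fx y s - Fx x0 t0) \<le> e2" if "(y,s) \<in> Omega a" "dist (y,s) (x0,t0) \<le> ?D" for y s
      using d1(2)[of "(y,s)"] that Dd1 by (simp add: dist_norm)
    have bt: "norm (Ft y s - Ft x0 t0) \<le> e2" if "(y,s) \<in> Omega a" "dist (y,s) (x0,t0) \<le> ?D" for y s
      using d2(2)[of "(y,s)"] that Dd2 by (simp add: dist_norm)
    have main: "norm (F x t - F x0 t0 - ((x - x0) *\<^sub>R Fx x0 t0 + (t - t0) *\<^sub>R Ft x0 t0)) \<le> e2 * \<bar>x - x0\<bar> + e2 * \<bar>t - t0\<bar>"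
    proof (cases "\<bar>x0\<bar> \<le> \<bar>x\<bar>")
      case True
      have A1: "norm (F x t0 - F x0 t0 - (x - x0) *\<^sub>R Fx x0 t0) \<le> e2 * \<bar>x - x0\<bar>"
      proof (rule seg_bound)
        fix y assume y: "y \<in> closed_segment x0 x"
        have m: "(y,t0) \<in> Omega a" using memA1[OF sgn True p0'(1) pp(2)] seg_mem[OF y] by (simp add: Omega_iff)
        have sub: "closed_segment x0 x \<subseteq> {y. (y,t0) \<in> Omega a}"
          using memA1[OF sgn True p0'(1) pp(2)] seg_mem by (auto simp: Omega_iff)
        show "((\<lambda>y. F y t0) has_vector_derivative Fx y t0) (at y within closed_segment x0 x)"
          by (rule has_vector_derivative_within_subset[OF Fx[OF m] sub])
        show "norm (Fx y t0 - Fx x0 t0) \<le> e2"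
          by (rule bx[OF m]) (rule pair_dist_mono, use seg_abs[OF y] in auto)
      qed
      have A2: "norm (F x t - F x t0 - (t - t0) *\<^sub>R Ft x0 t0) \<le> e2 * \<bar>t - t0\<bar>"
      proof (rule seg_bound)
        fix s assume s: "s \<in> closed_segment t0 t"
        have m: "(x,s) \<in> Omega a" using memA2[OF p0'(1) True pp(1)] seg_mem[OF s] pp by (simp add: Omega_iff)
        have sub: "closed_segment t0 t \<subseteq> {s. (x,s) \<in> Omega a}"
          using memA2[OF p0'(1) True pp(1)] seg_mem pp by (auto simp: Omega_iff)
        show "((\<lambda>s. F x s) has_vector_derivative Ft x s) (at s within closed_segment t0 t)"
          by (rule has_vector_derivative_within_subset[OF Ft[OF m] sub])
        show "norm (Ft x s - Ft x0 t0) \<le> e2"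
          by (rule bt[OF m]) (rule pair_dist_mono, use seg_abs[OF s] in auto)
      qed
      have "F x t - F x0 t0 - ((x - x0) *\<^sub>R Fx x0 t0 + (t - t0) *\<^sub>R Ft x0 t0)
          = (F x t0 - F x0 t0 - (x - x0) *\<^sub>R Fx x0 t0) + (F x t - F x t0 - (t - t0) *\<^sub>R Ft x0 t0)"
        by (simp add: algebra_simps)
      then have "norm (F x t - F x0 t0 - ((x - x0) *\<^sub>R Fx x0 t0 + (t - t0) *\<^sub>R Ft x0 t0))
          \<le> norm (F x t0 - F x0 t0 - (x - x0) *\<^sub>R Fx x0 t0) + norm (F x t - F x t0 - (t - t0) *\<^sub>R Ft x0 t0)"
        by (simp only: norm_triangle_ineq)
      with A1 A2 show ?thesis by linarith
    next
      case False
      then have lt: "\<bar>x\<bar> < \<bar>x0\<bar>" by simp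
      then have sgn': "\<bar>x - x0\<bar> < \<bar>x0\<bar>" using sgn by auto
      have B1: "norm (F x0 t - F x0 t0 - (t - t0) *\<^sub>R Ft x0 t0) \<le> e2 * \<bar>t - t0\<bar>"
      proof (rule seg_bound)
        fix s assume s: "s \<in> closed_segment t0 t"
        have m: "(x0,s) \<in> Omega a" using memB1[OF pp(1) lt p0'(1)] seg_mem[OF s] p0' by (simp add: Omega_iff)
        have sub: "closed_segment t0 t \<subseteq> {s. (x0,s) \<in> Omega a}"
          using memB1[OF pp(1) lt p0'(1)] seg_mem p0' by (auto simp: Omega_iff)
        show "((\<lambda>s. F x0 s) has_vector_derivative Ft x0 s) (at s within closed_segment t0 t)"
          by (rule has_vector_derivative_within_subset[OF Ft[OF m] sub])
        show "norm (Ft x0 s - Ft x0 t0) \<le> e2"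
          by (rule bt[OF m]) (rule pair_dist_mono, use seg_abs[OF s] in auto)
      qed
      have B2: "norm (F x t - F x0 t - (x - x0) *\<^sub>R Fx x0 t0) \<le> e2 * \<bar>x - x0\<bar>"
      proof (rule seg_bound)
        fix y assume y: "y \<in> closed_segment x0 x"
        have m: "(y,t) \<in> Omega a" using memB2[OF sgn' lt pp(1) p0'(2)] seg_mem[OF y] by (simp add: Omega_iff)
        have sub: "closed_segment x0 x \<subseteq> {y. (y,t) \<in> Omega a}"
          using memB2[OF sgn' lt pp(1) p0'(2)] seg_mem by (auto simp: Omega_iff)
        show "((\<lambda>y. F y t) has_vector_derivative Fx y t) (at y within closed_segment x0 x)"
          by (rule has_vector_derivative_within_subset[OF Fx[OF m] sub])
        show "norm (Fx y t - Fx x0 t0) \<le> e2"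
          by (rule bx[OF m]) (rule pair_dist_mono, use seg_abs[OF y] in auto)
      qed
      have "F x t - F x0 t0 - ((x - x0) *\<^sub>R Fx x0 t0 + (t - t0) *\<^sub>R Ft x0 t0)
          = (F x0 t - F x0 t0 - (t - t0) *\<^sub>R Ft x0 t0) + (F x t - F x0 t - (x - x0) *\<^sub>R Fx x0 t0)"
        by (simp add: algebra_simps)
      then have "norm (F x t - F x0 t0 - ((x - x0) *\<^sub>R Fx x0 t0 + (t - t0) *\<^sub>R Ft x0 t0))
          \<le> norm (F x0 t - F x0 t0 - (t - t0) *\<^sub>R Ft x0 t0) + norm (F x t - F x0 t - (x - x0) *\<^sub>R Fx x0 t0)"
        by (simp only: norm_triangle_ineq)
      with B1 B2 show ?thesis by linarith
    qed
    have "e2 * \<bar>x - x0\<bar> + e2 * \<bar>t - t0\<bar> \<le> e2 * ?D + e2 * ?D"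
      using dx dt e2 by (intro add_mono mult_left_mono) auto
    also have "\<dots> = e * ?D" by (simp add: e2_def)
    finally show "norm (F (fst p) (snd p) - F (fst (x0,t0)) (snd (x0,t0))
     - (fst (p - (x0,t0)) *\<^sub>R Fx x0 t0 + snd (p - (x0, t0)) *\<^sub>R Ft x0 t0)) \<le> e * norm (p - (x0,t0))"
      using main nd pxt by simp
  qed
qed




lemma cone_diag:
  fixes F Fx Ft :: "real \<Rightarrow> real \<Rightarrow> complex"
  assumes Fx: "\<And>x t. (x,t) \<in> Omega a \<Longrightarrow> ((\<lambda>y. F y t) has_vector_derivative Fx x t) (at x within {y. (y,t)\<in>Omega a})"
  and Ft: "\<And>x t. (x,t) \<in> Omega a \<Longrightarrow> ((\<lambda>s. F x s) has_vector_derivative Ft x t) (at t within {s. (x,s)\<in>Omega a})"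
  and cx: "continuous_on (Omega a) (\<lambda>p. Fx (fst p) (snd p))"
  and ct: "continuous_on (Omega a) (\<lambda>p. Ft (fst p) (snd p))"
  and x: "x \<in> {-a..a}"
  shows "((\<lambda>x. F x x) has_vector_derivative Fx x x + Ft x x) (at x within {-a..a})"
    and "((\<lambda>x. F x (-x)) has_vector_derivative Fx x (-x) - Ft x (-x)) (at x within {-a..a})"
proof -
  have m1: "(x,x) \<in> Omega a" and m2: "(x,-x) \<in> Omega a" using x by (auto simp: Omega_iff)
  have g1: "((\<lambda>x. (x,x)) has_derivative (\<lambda>h. (h,h))) (at x within {-a..a})"
    by (auto intro!: derivative_eq_intros)
  have F1: "((\<lambda>p. F (fst p) (snd p)) has_derivative (\<lambda>d. fst d *\<^sub>R Fx x x + snd d *\<^sub>R Ft x x))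
      (at ((\<lambda>x. (x,x)) x) within (\<lambda>x. (x,x)) ` {-a..a})"
    by (rule has_derivative_subset[OF cone_diff[OF Fx Ft cx ct m1]]) (auto simp: Omega_iff)
  from diff_chain_within[OF g1 F1]
  show "((\<lambda>x. F x x) has_vector_derivative Fx x x + Ft x x) (at x within {-a..a})"
    by (simp add: has_vector_derivative_def o_def scaleR_add_right)
  have g2: "((\<lambda>x. (x,-x)) has_derivative (\<lambda>h. (h,-h))) (at x within {-a..a})"
    by (auto intro!: derivative_eq_intros)
  have F2: "((\<lambda>p. F (fst p) (snd p)) has_derivative (\<lambda>d. fst d *\<^sub>R Fx x (-x) + snd d *\<^sub>R Ft x (-x)))
      (at ((\<lambda>x. (x,-x)) x) within (\<lambda>x. (x,-x)) ` {-a..a})"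
    by (rule has_derivative_subset[OF cone_diff[OF Fx Ft cx ct m2]]) (auto simp: Omega_iff)
  from diff_chain_within[OF g2 F2]
  show "((\<lambda>x. F x (-x)) has_vector_derivative Fx x (-x) - Ft x (-x)) (at x within {-a..a})"
    by (simp add: has_vector_derivative_def o_def scaleR_diff_right)
qed

lemma dint_split0:
  fixes h :: "real \<Rightarrow> complex"
  assumes "continuous_on {lo..hi} h" "a \<in> {lo..hi}" "b \<in> {lo..hi}" "c \<in> {lo..hi}"
  shows "dint a b h = dint c b h - dint c a h"
proof -
  have int: "h integrable_on {lo..hi}" using assms(1) by (rule integrable_continuous_real)
  have "dint a b h = integral {lo..b} h - integral {lo..a} h"
       "dint c b h = integral {lo..b} h - integral {lo..c} h"
       "dint c a h = integral {lo..a} h - integral {lo..c} h"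
    using assms by (auto intro!: dint_split integrable_on_subinterval[OF int])
  then show ?thesis by simp
qed

lemma dint_sym_deriv:
  fixes h :: "real \<Rightarrow> complex"
  assumes "continuous_on {-m..m} h" "y \<in> {-m..m}"
  shows "((\<lambda>y. dint (-y) y h) has_vector_derivative h y + h (-y)) (at y within {-m..m})"
proof -
  have m: "m \<ge> 0" using assms(2) by auto
  have eq: "dint (-z) z h = dint 0 z h - dint 0 (-z) h" if "z \<in> {-m..m}" for z
    by (rule dint_split0[OF assms(1)]) (use that m in auto)
  have d1: "((\<lambda>z. dint 0 z h) has_vector_derivative h y) (at y within {-m..m})"
    by (rule dint_deriv[OF assms(1)]) (use m assms(2) in auto)
  have n: "((\<lambda>z. -z) has_vector_derivative -1) (at y within {-m..m})"
    by (auto intro!: derivative_eq_intros)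
  have im: "(\<lambda>z. -z) ` {-m..m} = {-m..m::real}" by auto
  have d2': "((\<lambda>z. dint 0 z h) has_vector_derivative h (-y)) (at ((\<lambda>z. -z) y) within (\<lambda>z. -z) ` {-m..m})"
    unfolding im by (rule dint_deriv[OF assms(1)]) (use m assms(2) in auto)
  from vector_diff_chain_within[OF n d2']
  have d2: "((\<lambda>z. dint 0 (-z) h) has_vector_derivative - h (-y)) (at y within {-m..m})"
    by (simp add: o_def)
  have "((\<lambda>z. dint 0 z h - dint 0 (-z) h) has_vector_derivative h y - - h (-y)) (at y within {-m..m})"
    by (intro derivative_intros d1 d2)
  then have "((\<lambda>z. dint 0 z h - dint 0 (-z) h) has_vector_derivative h y + h (-y)) (at y within {-m..m})"
    by simp
  then show ?thesis
    by (rule has_vector_derivative_transform_within[where d=1]) (use eq assms in auto)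
qed

lemma dint_sym_abs: "dint (-y) y h = (if 0 \<le> y then 1 else -1) * integral {-\<bar>y\<bar>..\<bar>y\<bar>} (h :: real \<Rightarrow> complex)"
  by (auto simp: dint_def)

definition Gint :: "(real \<Rightarrow> real \<Rightarrow> complex) \<Rightarrow> (real \<Rightarrow> complex) \<Rightarrow> real \<Rightarrow> real \<Rightarrow> complex" where
  "Gint g v x y = dint (-y) y (\<lambda>t. g x t * v t)"

lemma cont_line:
  fixes g :: "real \<Rightarrow> real \<Rightarrow> complex"
  assumes "continuous_on (Omega a) (\<lambda>p. g (fst p) (snd p))" "\<bar>x\<bar> \<le> a"
  shows "continuous_on {-\<bar>x\<bar>..\<bar>x\<bar>} (\<lambda>t. g x t)"
proof -
  have "continuous_on {-\<bar>x\<bar>..\<bar>x\<bar>} ((\<lambda>p. g (fst p) (snd p)) \<circ> (\<lambda>t. (x,t)))"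
    by (rule continuous_on_compose[OF _ continuous_on_subset[OF assms(1)]])
       (use assms(2) in \<open>auto intro!: continuous_intros simp: Omega_iff\<close>)
  then show ?thesis by (simp add: o_def)
qed

lemma cont_refl:
  fixes g :: "real \<Rightarrow> real \<Rightarrow> complex"
  assumes "continuous_on (Omega a) (\<lambda>p. g (fst p) (snd p))"
  shows "continuous_on (Omega a) (\<lambda>p. g (fst p) (- snd p))"
proof -
  have "continuous_on (Omega a) ((\<lambda>p. g (fst p) (snd p)) \<circ> (\<lambda>p. (fst p, - snd p)))"
    by (rule continuous_on_compose[OF _ continuous_on_subset[OF assms(1)]])
       (auto intro!: continuous_intros simp: Omega_def)
  then show ?thesis by (simp add: o_def)
qed

lemma cont_snd:
  fixes v :: "real \<Rightarrow> complex"
  assumes "continuous_on {-a..a} v"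
  shows "continuous_on (Omega a) (\<lambda>p. v (snd p))" "continuous_on (Omega a) (\<lambda>p. v (- snd p))"
proof -
  have "continuous_on (Omega a) (v \<circ> snd)"
    by (rule continuous_on_compose[OF _ continuous_on_subset[OF assms(1)]])
       (auto intro!: continuous_intros simp: Omega_def)
  then show "continuous_on (Omega a) (\<lambda>p. v (snd p))" by (simp add: o_def)
  have "continuous_on (Omega a) (v \<circ> (\<lambda>p. - snd p))"
    by (rule continuous_on_compose[OF _ continuous_on_subset[OF assms(1)]])
       (auto intro!: continuous_intros simp: Omega_def)
  then show "continuous_on (Omega a) (\<lambda>p. v (- snd p))" by (simp add: o_def)
qed

lemma G_y:
  fixes g :: "real \<Rightarrow> real \<Rightarrow> complex" and v :: "real \<Rightarrow> complex"
  assumes cg: "continuous_on (Omega a) (\<lambda>p. g (fst p) (snd p))" and cv: "continuous_on {-a..a} v"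
    and p: "(x,y) \<in> Omega a"
  shows "((\<lambda>y. Gint g v x y) has_vector_derivative g x y * v y + g x (-y) * v (-y)) (at y within {y. (x,y) \<in> Omega a})"
proof -
  have xa: "\<bar>x\<bar> \<le> a" using p by (simp add: Omega_iff)
  have S: "{y. (x,y) \<in> Omega a} = {-\<bar>x\<bar>..\<bar>x\<bar>}" using xa by (auto simp: Omega_iff)
  have ch: "continuous_on {-\<bar>x\<bar>..\<bar>x\<bar>} (\<lambda>t. g x t * v t)"
    by (intro continuous_intros cont_line[OF cg xa] continuous_on_subset[OF cv]) (use xa in auto)
  show ?thesis unfolding S Gint_def
    by (rule dint_sym_deriv[OF ch]) (use p in \<open>auto simp: Omega_iff\<close>)
qed

lemma line_nhd:
  assumes p: "(x0,y) \<in> Omega a"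
  obtains U where "convex U" "x0 \<in> U" "U \<subseteq> {x. (x,y) \<in> Omega a}"
    "at x0 within {x. (x,y) \<in> Omega a} = at x0 within U"
proof -
  have pp: "\<bar>y\<bar> \<le> \<bar>x0\<bar>" "\<bar>x0\<bar> \<le> a" using p by (auto simp: Omega_iff)
  consider "y = 0" | "y \<noteq> 0" "x0 > 0" | "y \<noteq> 0" "x0 < 0" using pp by force
  then show ?thesis
  proof cases
    case 1
    have e: "{x. (x,y) \<in> Omega a} = {-a..a}" using 1 by (auto simp: Omega_iff)
    show ?thesis
    proof (rule that[of "{-a..a}"])
      show "x0 \<in> {-a..a}" using pp by auto
    qed (use e in auto)
  next
    case 2
    show ?thesis
    proof (rule that[of "{\<bar>y\<bar>..a}"])
      show "at x0 within {x. (x, y) \<in> Omega a} = at x0 within {\<bar>y\<bar>..a}"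
        by (rule at_within_nhd[where S="{0<..}"]) (use 2 in \<open>auto simp: Omega_iff\<close>)
    qed (use 2 pp in \<open>auto simp: Omega_iff\<close>)
  next
    case 3
    show ?thesis
    proof (rule that[of "{-a..-\<bar>y\<bar>}"])
      show "at x0 within {x. (x, y) \<in> Omega a} = at x0 within {-a..-\<bar>y\<bar>}"
        by (rule at_within_nhd[where S="{..<0}"]) (use 3 in \<open>auto simp: Omega_iff\<close>)
    qed (use 3 pp in \<open>auto simp: Omega_iff\<close>)
  qed
qed

lemma G_x:
  fixes g gx :: "real \<Rightarrow> real \<Rightarrow> complex" and v :: "real \<Rightarrow> complex"
  assumes gd: "\<And>x t. (x,t) \<in> Omega a \<Longrightarrow> ((\<lambda>y. g y t) has_vector_derivative gx x t) (at x within {y. (y,t)\<in>Omega a})"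
    and cgx: "continuous_on (Omega a) (\<lambda>p. gx (fst p) (snd p))" and cv: "continuous_on {-a..a} v"
    and cg: "continuous_on (Omega a) (\<lambda>p. g (fst p) (snd p))"
    and p: "(x0,y) \<in> Omega a"
  shows "((\<lambda>x. Gint g v x y) has_vector_derivative Gint gx v x0 y) (at x0 within {x. (x,y) \<in> Omega a})"
proof -
  obtain U where U: "convex U" "x0 \<in> U" "U \<subseteq> {x. (x,y) \<in> Omega a}"
    "at x0 within {x. (x,y) \<in> Omega a} = at x0 within U" using line_nhd[OF p] by blast
  have memU: "(x,t) \<in> Omega a" if "x \<in> U" "t \<in> cbox (-\<bar>y\<bar>) \<bar>y\<bar>" for x t
    using U(3) that by (auto simp: Omega_iff)
  have L: "((\<lambda>x. integral (cbox (-\<bar>y\<bar>) \<bar>y\<bar>) (\<lambda>t. g x t * v t)) has_vector_derivative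
      integral (cbox (-\<bar>y\<bar>) \<bar>y\<bar>) (\<lambda>t. gx x0 t * v t)) (at x0 within U)"
  proof (rule leibniz_rule_vector_derivative[where fx="\<lambda>x t. gx x t * v t"])
    fix x t assume xt: "x \<in> U" "t \<in> cbox (-\<bar>y\<bar>) \<bar>y\<bar>"
    have m: "(x,t) \<in> Omega a" by (rule memU[OF xt])
    have sub: "U \<subseteq> {y. (y,t) \<in> Omega a}" using U(3) xt by (auto simp: Omega_iff)
    show "((\<lambda>x. g x t * v t) has_vector_derivative gx x t * v t) (at x within U)"
      by (intro derivative_intros has_vector_derivative_within_subset[OF gd[OF m] sub])
  next
    fix x assume x: "x \<in> U"
    have xa: "\<bar>x\<bar> \<le> a" "\<bar>y\<bar> \<le> \<bar>x\<bar>" using U(3) x by (auto simp: Omega_iff)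
    have "continuous_on {-\<bar>y\<bar>..\<bar>y\<bar>} (\<lambda>t. g x t * v t)"
      by (intro continuous_intros continuous_on_subset[OF cont_line[OF cg xa(1)]] continuous_on_subset[OF cv])
         (use xa in auto)
    then show "(\<lambda>t. g x t * v t) integrable_on cbox (-\<bar>y\<bar>) \<bar>y\<bar>"
      by (simp add: integrable_continuous_real)
  next
    have "continuous_on (U \<times> cbox (-\<bar>y\<bar>) \<bar>y\<bar>) (\<lambda>p. gx (fst p) (snd p) * v (snd p))"
      by (intro continuous_intros continuous_on_subset[OF cgx] continuous_on_subset[OF cont_snd(1)[OF cv]])
         (auto dest: memU)
    then show "continuous_on (U \<times> cbox (-\<bar>y\<bar>) \<bar>y\<bar>) (\<lambda>(x, t). gx x t * v t)"
      by (simp add: case_prod_beta')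
  qed (use U in auto)
  have "((\<lambda>x. (if 0 \<le> y then 1 else -1) * integral {-\<bar>y\<bar>..\<bar>y\<bar>} (\<lambda>t. g x t * v t)) has_vector_derivative
      (if 0 \<le> y then 1 else -1) * integral {-\<bar>y\<bar>..\<bar>y\<bar>} (\<lambda>t. gx x0 t * v t)) (at x0 within U)"
    using L by (intro derivative_intros) simp
  then show ?thesis unfolding Gint_def dint_sym_abs[of y] U(4) .
qed

lemma G_x_cont:
  fixes gx :: "real \<Rightarrow> real \<Rightarrow> complex" and v :: "real \<Rightarrow> complex"
  assumes cgx: "continuous_on (Omega a) (\<lambda>p. gx (fst p) (snd p))" and cv: "continuous_on {-a..a} v"
  shows "continuous_on (Omega a) (\<lambda>p. Gint gx v (fst p) (snd p))"
proof -
  have eq: "Gint gx v (fst p) (snd p) = of_real (snd p) * integral (cbox (-1) 1) (\<lambda>s. gx (fst p) (snd p * s) * v (snd p * s))"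
    if "p \<in> Omega a" for p
  proof -
    obtain x y where p: "p = (x,y)" by (cases p)
    have xa: "\<bar>x\<bar> \<le> a" "\<bar>y\<bar> \<le> \<bar>x\<bar>" using that p by (auto simp: Omega_iff)
    have "continuous_on {-\<bar>y\<bar>..\<bar>y\<bar>} (\<lambda>t. gx x t * v t)"
      by (intro continuous_intros continuous_on_subset[OF cont_line[OF cgx xa(1)]] continuous_on_subset[OF cv])
         (use xa in auto)
    then show ?thesis unfolding Gint_def p by (simp add: dint_scale)
  qed
  define m where "m = (\<lambda>q::(real\<times>real)\<times>real. (fst (fst q), snd (fst q) * snd q))"
  have mem: "m q \<in> Omega a" if "q \<in> Omega a \<times> cbox (-1) 1" for q
  proof -
    obtain x y s where q: "q = ((x,y),s)" by (metis prod.collapse)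
    have s: "\<bar>s\<bar> \<le> 1" "(x,y) \<in> Omega a" using that q by auto
    have "\<bar>y * s\<bar> \<le> \<bar>y\<bar>" using s(1) by (simp add: abs_mult mult_left_le)
    then show ?thesis using s(2) by (simp add: q m_def Omega_iff)
  qed
  have cm: "continuous_on (Omega a \<times> cbox (-1) 1) m"
    unfolding m_def by (intro continuous_intros)
  have msub: "m ` (Omega a \<times> cbox (-1) 1) \<subseteq> Omega a" using mem by blast
  have c1: "continuous_on (Omega a \<times> cbox (-1) 1) ((\<lambda>p. gx (fst p) (snd p)) \<circ> m)"
    by (rule continuous_on_compose[OF cm continuous_on_subset[OF cgx msub]])
  have sm: "snd (m q) \<in> {-a..a}" if "q \<in> Omega a \<times> cbox (-1) 1" for q
    using mem[OF that] by (cases "m q") (auto simp: Omega_iff)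
  have msub2: "(snd \<circ> m) ` (Omega a \<times> cbox (-1) 1) \<subseteq> {-a..a}"
    using sm by auto
  have c2: "continuous_on (Omega a \<times> cbox (-1) 1) (v \<circ> (snd \<circ> m))"
    by (rule continuous_on_compose[OF continuous_on_compose[OF cm continuous_on_snd[OF continuous_on_id]] continuous_on_subset[OF cv msub2]])
  have c3: "continuous_on (Omega a \<times> cbox (-1) 1) (\<lambda>(p, s). gx (fst p) (snd p * s) * v (snd p * s))"
  proof -
    have "continuous_on (Omega a \<times> cbox (-1) 1) (\<lambda>q. ((\<lambda>p. gx (fst p) (snd p)) \<circ> m) q * (v \<circ> (snd \<circ> m)) q)"
      by (rule continuous_on_mult[OF c1 c2])
    then show ?thesis by (simp add: m_def o_def case_prod_beta')
  qed
  have "continuous_on (Omega a) (\<lambda>p. integral (cbox (-1) 1) (\<lambda>s. gx (fst p) (snd p * s) * v (snd p * s)))"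
    by (rule integral_continuous_on_param[OF c3])
  then have "continuous_on (Omega a) (\<lambda>p. of_real (snd p) * integral (cbox (-1) 1) (\<lambda>s. gx (fst p) (snd p * s) * v (snd p * s)))"
    by (intro continuous_on_mult continuous_on_of_real continuous_on_snd continuous_on_id)
  then show ?thesis by (rule continuous_on_cong[THEN iffD1, rotated 2]) (use eq in auto)
qed




lemma deriv_cont:
  assumes "\<And>x. x \<in> S \<Longrightarrow> (f has_vector_derivative f' x) (at x within S)"
  shows "continuous_on S f"
  using assms unfolding continuous_on_eq_continuous_within
  by (meson has_vector_derivative_continuous)

lemma H_deriv:
  fixes g gx :: "real \<Rightarrow> real \<Rightarrow> complex" and v :: "real \<Rightarrow> complex"
  assumes gd: "\<And>x t. (x,t) \<in> Omega a \<Longrightarrow> ((\<lambda>y. g y t) has_vector_derivative gx x t) (at x within {y. (y,t)\<in>Omega a})"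
    and cg: "continuous_on (Omega a) (\<lambda>p. g (fst p) (snd p))"
    and cgx: "continuous_on (Omega a) (\<lambda>p. gx (fst p) (snd p))" and cv: "continuous_on {-a..a} v"
    and x: "x \<in> {-a..a}"
  shows "((\<lambda>x. Gint g v x x) has_vector_derivative Gint gx v x x + (g x x * v x + g x (-x) * v (-x))) (at x within {-a..a})"
proof (rule cone_diag(1)[where F="Gint g v" and Fx="Gint gx v" and Ft="\<lambda>x y. g x y * v y + g x (-y) * v (-y)"])
  show "continuous_on (Omega a) (\<lambda>p. g (fst p) (snd p) * v (snd p) + g (fst p) (- snd p) * v (- snd p))"
    by (intro continuous_on_add continuous_on_mult cg cont_refl cont_snd cv)
qed (use x in \<open>auto intro: G_x[OF gd cgx cv cg] G_y[OF cg cv] G_x_cont[OF cgx cv]\<close>)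

locale kern =
  fixes a :: real and q :: "real \<Rightarrow> complex" and K Kx Kt Kxx Ktt :: "real \<Rightarrow> real \<Rightarrow> complex"
  assumes a_pos: "a > 0"
    and qc: "continuous_on {-a..a} q"
    and Kdx: "\<And>x t. (x,t) \<in> Omega a \<Longrightarrow> ((\<lambda>y. K y t) has_vector_derivative Kx x t) (at x within {y. (y,t)\<in>Omega a})"
    and Kdt: "\<And>x t. (x,t) \<in> Omega a \<Longrightarrow> ((\<lambda>s. K x s) has_vector_derivative Kt x t) (at t within {s. (x,s)\<in>Omega a})"
    and Kdxx: "\<And>x t. (x,t) \<in> Omega a \<Longrightarrow> ((\<lambda>y. Kx y t) has_vector_derivative Kxx x t) (at x within {y. (y,t)\<in>Omega a})"
    and Kdtt: "\<And>x t. (x,t) \<in> Omega a \<Longrightarrow> ((\<lambda>s. Kt x s) has_vector_derivative Ktt x t) (at t within {s. (x,s)\<in>Omega a})"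
    and cK: "continuous_on (Omega a) (\<lambda>p. K (fst p) (snd p))"
    and cKx: "continuous_on (Omega a) (\<lambda>p. Kx (fst p) (snd p))"
    and cKt: "continuous_on (Omega a) (\<lambda>p. Kt (fst p) (snd p))"
    and cKxx: "continuous_on (Omega a) (\<lambda>p. Kxx (fst p) (snd p))"
    and cKtt: "continuous_on (Omega a) (\<lambda>p. Ktt (fst p) (snd p))"
    and pde: "\<And>x t. (x,t) \<in> Omega a \<Longrightarrow> Kxx x t - q x * K x t = Ktt x t"
    and diag: "\<And>x. x \<in> {-a..a} \<Longrightarrow> K x x = dint 0 x q / 2"
    and anti: "\<And>x. x \<in> {-a..a} \<Longrightarrow> K x (-x) = 0"
begin

definition T0 :: "(real \<Rightarrow> complex) \<Rightarrow> real \<Rightarrow> complex" where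
  "T0 v x = v x + Gint K v x x"

lemma Q_deriv: "x \<in> {-a..a} \<Longrightarrow> ((\<lambda>x. dint 0 x q) has_vector_derivative q x) (at x within {-a..a})"
  by (rule dint_deriv[OF qc]) (use a_pos in auto)

lemma diag_rel:
  assumes x: "x \<in> {-a..a}"
  shows "Kx x x + Kt x x = q x / 2" "Kx x (-x) - Kt x (-x) = 0"
proof -
  have d1: "((\<lambda>x. K x x) has_vector_derivative Kx x x + Kt x x) (at x within {-a..a})"
    by (rule cone_diag(1)[OF Kdx Kdt cKx cKt x])
  have "((\<lambda>x. dint 0 x q / 2) has_vector_derivative q x / 2) (at x within {-a..a})"
    using Q_deriv[OF x] by (intro derivative_intros) (simp add: divide_inverse)
  then have d2: "((\<lambda>x. K x x) has_vector_derivative q x / 2) (at x within {-a..a})"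
    by (rule has_vector_derivative_transform_within[where d=1]) (use x diag in auto)
  show "Kx x x + Kt x x = q x / 2"
    by (rule vector_derivative_unique_within_closed_interval[where a="-a" and b=a])
       (use a_pos x d1 d2 in auto)
  have e1: "((\<lambda>x. K x (-x)) has_vector_derivative Kx x (-x) - Kt x (-x)) (at x within {-a..a})"
    by (rule cone_diag(2)[OF Kdx Kdt cKx cKt x])
  have "((\<lambda>x. 0::complex) has_vector_derivative 0) (at x within {-a..a})"
    by (intro derivative_intros)
  then have e2: "((\<lambda>x. K x (-x)) has_vector_derivative 0) (at x within {-a..a})"
    by (rule has_vector_derivative_transform_within[where d=1]) (use x anti in auto)
  show "Kx x (-x) - Kt x (-x) = 0"
    by (rule vector_derivative_unique_within_closed_interval[where a="-a" and b=a])
       (use a_pos x e1 e2 in auto)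
qed

lemma line_set: "\<bar>x\<bar> \<le> a \<Longrightarrow> {s. (x,s) \<in> Omega a} = {-\<bar>x\<bar>..\<bar>x\<bar>}"
  by (auto simp: Omega_iff)

lemma minmax_sym: "{min (-x) x..max (-x) x} = {-\<bar>x\<bar>..\<bar>x\<bar>::real}"
  by (auto simp: min_def max_def)

lemma parts:
  fixes v v1 v2 :: "real \<Rightarrow> complex"
  assumes vd1: "\<And>x. x \<in> {-a..a} \<Longrightarrow> (v has_vector_derivative v1 x) (at x within {-a..a})"
    and vd2: "\<And>x. x \<in> {-a..a} \<Longrightarrow> (v1 has_vector_derivative v2 x) (at x within {-a..a})"
    and cv2: "continuous_on {-a..a} v2"
    and x: "x \<in> {-a..a}"
  shows "Gint K v2 x x = K x x * v1 x - Kt x x * v x - K x (-x) * v1 (-x) + Kt x (-x) * v (-x)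
           + Gint Ktt v x x"
proof -
  have xa: "\<bar>x\<bar> \<le> a" using x by auto
  have cv: "continuous_on {-a..a} v" by (rule deriv_cont[OF vd1])
  have cv1: "continuous_on {-a..a} v1" by (rule deriv_cont[OF vd2])
  let ?S = "{-\<bar>x\<bar>..\<bar>x\<bar>}"
  have sub: "?S \<subseteq> {-a..a}" using xa by auto
  have FD: "((\<lambda>t. K x t * v1 t - Kt x t * v t) has_vector_derivative
      (Kt x t * v1 t + K x t * v2 t) - (Ktt x t * v t + Kt x t * v1 t)) (at t within ?S)" if t: "t \<in> ?S" for t
  proof -
    have m: "(x,t) \<in> Omega a" using t xa by (auto simp: Omega_iff)
    have k1: "((\<lambda>s. K x s) has_vector_derivative Kt x t) (at t within ?S)"
      using Kdt[OF m] by (simp add: line_set[OF xa])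
    have k2: "((\<lambda>s. Kt x s) has_vector_derivative Ktt x t) (at t within ?S)"
      using Kdtt[OF m] by (simp add: line_set[OF xa])
    have w1: "(v1 has_vector_derivative v2 t) (at t within ?S)"
      by (rule has_vector_derivative_within_subset[OF vd2 sub]) (use t sub in auto)
    have w0: "(v has_vector_derivative v1 t) (at t within ?S)"
      by (rule has_vector_derivative_within_subset[OF vd1 sub]) (use t sub in auto)
    have A: "((\<lambda>s. K x s * v1 s) has_vector_derivative K x t * v2 t + Kt x t * v1 t) (at t within ?S)"
      by (rule has_vector_derivative_mult[OF k1 w1])
    have B: "((\<lambda>s. Kt x s * v s) has_vector_derivative Kt x t * v1 t + Ktt x t * v t) (at t within ?S)"
      by (rule has_vector_derivative_mult[OF k2 w0])
    from has_vector_derivative_diff[OF A B] show ?thesis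
      by (simp add: algebra_simps)
  qed
  have c1: "continuous_on ?S (\<lambda>t. K x t * v2 t)"
    by (intro continuous_intros cont_line[OF cK xa] continuous_on_subset[OF cv2 sub])
  have c2: "continuous_on ?S (\<lambda>t. Ktt x t * v t)"
    by (intro continuous_intros cont_line[OF cKtt xa] continuous_on_subset[OF cv sub])
  have "dint (-x) x (\<lambda>t. (Kt x t * v1 t + K x t * v2 t) - (Ktt x t * v t + Kt x t * v1 t))
      = (K x x * v1 x - Kt x x * v x) - (K x (-x) * v1 (-x) - Kt x (-x) * v (-x))"
    by (rule dint_FTC) (use FD in \<open>simp add: minmax_sym\<close>)
  moreover have "dint (-x) x (\<lambda>t. (Kt x t * v1 t + K x t * v2 t) - (Ktt x t * v t + Kt x t * v1 t))
      = dint (-x) x (\<lambda>t. K x t * v2 t - Ktt x t * v t)"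
    by (rule dint_cong) (simp add: algebra_simps)
  moreover have "dint (-x) x (\<lambda>t. K x t * v2 t - Ktt x t * v t) = Gint K v2 x x - Gint Ktt v x x"
    unfolding Gint_def by (rule dint_diff) (use c1 c2 in \<open>simp_all add: minmax_sym\<close>)
  ultimately have "Gint K v2 x x - Gint Ktt v x x = (K x x * v1 x - Kt x x * v x) - (K x (-x) * v1 (-x) - Kt x (-x) * v (-x))"
    by simp
  then have "Gint K v2 x x = (K x x * v1 x - Kt x x * v x) - (K x (-x) * v1 (-x) - Kt x (-x) * v (-x)) + Gint Ktt v x x"
    by (simp only: diff_eq_eq)
  then show ?thesis by simp
qed

lemma pde_int:
  fixes v :: "real \<Rightarrow> complex"
  assumes cv: "continuous_on {-a..a} v" and x: "x \<in> {-a..a}"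
  shows "Gint Ktt v x x = Gint Kxx v x x - q x * Gint K v x x"
proof -
  have xa: "\<bar>x\<bar> \<le> a" using x by auto
  let ?S = "{-\<bar>x\<bar>..\<bar>x\<bar>}"
  have sub: "?S \<subseteq> {-a..a}" using xa by auto
  have "Gint Ktt v x x = dint (-x) x (\<lambda>t. Kxx x t * v t - q x * (K x t * v t))"
    unfolding Gint_def
  proof (rule dint_cong)
    fix t assume "t \<in> {min (- x) x..max (- x) x}"
    then have m: "(x,t) \<in> Omega a" using xa by (auto simp: Omega_iff min_def max_def abs_le_iff split: if_splits)
    show "Ktt x t * v t = Kxx x t * v t - q x * (K x t * v t)"
      using pde[OF m] by (auto simp: algebra_simps)
  qed
  also have "\<dots> = Gint Kxx v x x - q x * Gint K v x x"
    unfolding Gint_def dint_cmult[symmetric]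
    by (rule dint_diff) (auto simp: minmax_sym intro!: continuous_intros cont_line[OF cKxx xa]
         cont_line[OF cK xa] continuous_on_subset[OF cv sub])
  finally show ?thesis .
qed

lemma T0_transmute:
  fixes v v1 v2 :: "real \<Rightarrow> complex"
  assumes vd1: "\<And>x. x \<in> {-a..a} \<Longrightarrow> (v has_vector_derivative v1 x) (at x within {-a..a})"
    and vd2: "\<And>x. x \<in> {-a..a} \<Longrightarrow> (v1 has_vector_derivative v2 x) (at x within {-a..a})"
    and cv2: "continuous_on {-a..a} v2"
  defines "D1 \<equiv> \<lambda>x. v1 x + Gint Kx v x x + dint 0 x q / 2 * v x"
    and "D2 \<equiv> \<lambda>x. v2 x + Gint Kxx v x x + Kx x x * v x + Kx x (-x) * v (-x) + q x / 2 * v x + dint 0 x q / 2 * v1 x"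
  shows "\<And>x. x \<in> {-a..a} \<Longrightarrow> (T0 v has_vector_derivative D1 x) (at x within {-a..a})"
    and "\<And>x. x \<in> {-a..a} \<Longrightarrow> (D1 has_vector_derivative D2 x) (at x within {-a..a})"
    and "\<And>x. x \<in> {-a..a} \<Longrightarrow> - D2 x + q x * T0 v x = T0 (\<lambda>t. - v2 t) x"
proof -
  have cv: "continuous_on {-a..a} v" by (rule deriv_cont[OF vd1])
  have cv1: "continuous_on {-a..a} v1" by (rule deriv_cont[OF vd2])
  fix x assume x: "x \<in> {-a..a}"
  have H1: "((\<lambda>x. Gint K v x x) has_vector_derivative Gint Kx v x x + (K x x * v x + K x (-x) * v (-x))) (at x within {-a..a})"
    by (rule H_deriv[OF Kdx cK cKx cv x])
  have "(T0 v has_vector_derivative v1 x + (Gint Kx v x x + (K x x * v x + K x (-x) * v (-x)))) (at x within {-a..a})"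
    unfolding T0_def[abs_def] by (intro derivative_intros vd1 x H1)
  moreover have "v1 x + (Gint Kx v x x + (K x x * v x + K x (-x) * v (-x))) = D1 x"
    using diag[OF x] anti[OF x] by (simp add: D1_def)
  ultimately show "(T0 v has_vector_derivative D1 x) (at x within {-a..a})" by simp
next
  have cv: "continuous_on {-a..a} v" by (rule deriv_cont[OF vd1])
  have cv1: "continuous_on {-a..a} v1" by (rule deriv_cont[OF vd2])
  fix x assume x: "x \<in> {-a..a}"
  have H2: "((\<lambda>x. Gint Kx v x x) has_vector_derivative Gint Kxx v x x + (Kx x x * v x + Kx x (-x) * v (-x))) (at x within {-a..a})"
    by (rule H_deriv[OF Kdxx cKx cKxx cv x])
  have "(D1 has_vector_derivative v2 x + (Gint Kxx v x x + (Kx x x * v x + Kx x (-x) * v (-x)))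
       + (q x / 2 * v x + dint 0 x q / 2 * v1 x)) (at x within {-a..a})"
  proof -
    have "((\<lambda>x. dint 0 x q / 2 * v x) has_vector_derivative (q x / 2 * v x + dint 0 x q / 2 * v1 x)) (at x within {-a..a})"
    proof -
      have "((\<lambda>x. dint 0 x q / 2) has_vector_derivative q x / 2) (at x within {-a..a})"
        using Q_deriv[OF x] by (intro derivative_intros) (simp add: divide_inverse)
      from has_vector_derivative_mult[OF this vd1[OF x]] show ?thesis by (simp add: algebra_simps)
    qed
    then show ?thesis unfolding D1_def by (intro derivative_intros vd2 x H2)
  qed
  then show "(D1 has_vector_derivative D2 x) (at x within {-a..a})"
    by (simp add: D2_def algebra_simps)
next
  have cv: "continuous_on {-a..a} v" by (rule deriv_cont[OF vd1])
  fix x assume x: "x \<in> {-a..a}"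
  have P: "Gint K v2 x x = K x x * v1 x - Kt x x * v x - K x (-x) * v1 (-x) + Kt x (-x) * v (-x)
           + Gint Ktt v x x" by (rule parts[OF vd1 vd2 cv2 x])
  have neg: "Gint K (\<lambda>t. - v2 t) x x = - Gint K v2 x x"
    unfolding Gint_def by (simp add: dint_neg)
  have R: "Kx x x + Kt x x = q x / 2" "Kx x (-x) - Kt x (-x) = 0" by (rule diag_rel[OF x])+
  have Rq: "q x = 2 * (Kx x x + Kt x x)" using R(1) by (simp add: field_simps)
  have Ra: "Kx x (-x) = Kt x (-x)" using R(2) by simp
  show "- D2 x + q x * T0 v x = T0 (\<lambda>t. - v2 t) x"
    unfolding T0_def neg P pde_int[OF cv x] D2_def diag[OF x] anti[OF x]
    by (simp add: Rq Ra algebra_simps)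
qed

end




lemma refl_deriv:
  fixes f f' :: "real \<Rightarrow> complex"
  assumes fd: "\<And>x. x \<in> {-a..a} \<Longrightarrow> (f has_vector_derivative f' x) (at x within {-a..a})"
    and x: "x \<in> {-a..a}"
  shows "((\<lambda>t. f (-t)) has_vector_derivative - f' (-x)) (at x within {-a..a})"
proof -
  have n: "((\<lambda>z. -z) has_vector_derivative -1) (at x within {-a..a})"
    by (auto intro!: derivative_eq_intros)
  have im: "(\<lambda>z. -z) ` {-a..a} = {-a..a::real}" by auto
  have d: "(f has_vector_derivative f' (-x)) (at ((\<lambda>z. -z) x) within (\<lambda>z. -z) ` {-a..a})"
    unfolding im by (rule fd) (use x in auto)
  from vector_diff_chain_within[OF n d] show ?thesis by (simp add: o_def)
qed

lemma cont_refl1: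
  fixes f :: "real \<Rightarrow> complex"
  assumes "continuous_on {-a..a} f"
  shows "continuous_on {-a..a} (\<lambda>t. f (-t))"
proof -
  have "continuous_on {-a..a} (f \<circ> (\<lambda>t. -t))"
    by (rule continuous_on_compose[OF _ continuous_on_subset[OF assms]]) (auto intro!: continuous_intros)
  then show ?thesis by (simp add: o_def)
qed

context kern
begin

lemma T0_cong:
  assumes "\<And>t. t \<in> {-a..a} \<Longrightarrow> w1 t = w2 t" "x \<in> {-a..a}"
  shows "T0 w1 x = T0 w2 x"
proof -
  have "\<And>t. t \<in> {min (-x) x..max (-x) x} \<Longrightarrow> K x t * w1 t = K x t * w2 t"
    using assms by (auto simp: min_def max_def split: if_splits)
  then have "dint (-x) x (\<lambda>t. K x t * w1 t) = dint (-x) x (\<lambda>t. K x t * w2 t)" by (rule dint_cong)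
  then show ?thesis unfolding T0_def Gint_def using assms by simp
qed

lemma bT_eq:
  fixes u :: "real \<Rightarrow> complex"
  assumes cu: "continuous_on {-a..a} u" and x: "x \<in> {-a..a}"
  shows "bT K h u x = T0 (\<lambda>t. u t + h / 2 * dint (-t) t u) x"
proof -
  have xa: "\<bar>x\<bar> \<le> a" using x by auto
  let ?S = "{-\<bar>x\<bar>..\<bar>x\<bar>}"
  have sub: "?S \<subseteq> {-a..a}" using xa by auto
  define g where "g = (\<lambda>s. K x s - K x (-s))"
  define P where "P = (\<lambda>t. dint t x g)"
  define U where "U = (\<lambda>t. dint 0 t u)"
  define W where "W = (\<lambda>t. dint (-t) t u)"
  have cKl: "continuous_on ?S (\<lambda>t. K x t)" by (rule cont_line[OF cK xa])
  have cKr: "continuous_on ?S (\<lambda>t. K x (-t))"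
  proof -
    have "continuous_on ?S ((\<lambda>t. K x t) \<circ> (\<lambda>t. -t))"
      by (rule continuous_on_compose[OF _ continuous_on_subset[OF cKl]]) (auto intro!: continuous_intros)
    then show ?thesis by (simp add: o_def)
  qed
  have cg: "continuous_on ?S g" unfolding g_def by (intro continuous_intros cKl cKr)
  have cuS: "continuous_on ?S u" by (rule continuous_on_subset[OF cu sub])
  have Ud: "(U has_vector_derivative u t) (at t within {-a..a})" if "t \<in> {-a..a}" for t
    unfolding U_def by (rule dint_deriv[OF cu]) (use a_pos that in auto)
  have cU: "continuous_on {-a..a} U" by (rule deriv_cont[OF Ud])
  have cUS: "continuous_on ?S U" by (rule continuous_on_subset[OF cU sub])
  have Pd: "(P has_vector_derivative - g t) (at t within ?S)" if "t \<in> ?S" for t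
  proof -
    have "((\<lambda>t. dint x t g) has_vector_derivative g t) (at t within ?S)"
      by (rule dint_deriv[OF cg]) (use that in auto)
    then have "((\<lambda>t. - dint x t g) has_vector_derivative - g t) (at t within ?S)"
      by (intro derivative_intros)
    then show ?thesis unfolding P_def by (subst dint_swap) simp
  qed
  have cP: "continuous_on ?S P" by (rule deriv_cont[OF Pd])
  have P0: "P x = 0" unfolding P_def by simp
  have P1: "P (-x) = 0" unfolding P_def g_def by (rule dint_odd) simp
  \<comment> \<open>integration by parts for the P-term\<close>
  have FD: "((\<lambda>t. P t * U t) has_vector_derivative P t * u t + - g t * U t) (at t within ?S)"
    if "t \<in> ?S" for t
    using has_vector_derivative_mult[OF Pd[OF that] has_vector_derivative_within_subset[OF Ud sub]] that sub
    by auto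
  have I1: "dint (-x) x (\<lambda>t. P t * u t + - g t * U t) = 0"
    using dint_FTC[of "-x" x "\<lambda>t. P t * U t"] FD P0 P1 by (simp add: minmax_sym)
  have I2: "dint (-x) x (\<lambda>t. P t * u t + - g t * U t) = dint (-x) x (\<lambda>t. P t * u t) - dint (-x) x (\<lambda>t. g t * U t)"
    by (subst dint_add) (auto simp: minmax_sym dint_neg intro!: continuous_intros cP cuS cg cUS)
  have PU: "dint (-x) x (\<lambda>t. P t * u t) = dint (-x) x (\<lambda>t. g t * U t)" using I1 I2 by simp
  have gU: "dint (-x) x (\<lambda>t. g t * U t) = dint (-x) x (\<lambda>t. K x t * U t) - dint (-x) x (\<lambda>t. K x (-t) * U t)"
    unfolding g_def by (subst dint_diff[symmetric]) (auto simp: minmax_sym algebra_simps intro!: continuous_intros cKl cKr cUS)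
  have cUr: "continuous_on ?S (\<lambda>t. U (-t))"
  proof -
    have "continuous_on ?S (U \<circ> (\<lambda>t. -t))"
      by (rule continuous_on_compose[OF _ continuous_on_subset[OF cUS]]) (auto intro!: continuous_intros)
    then show ?thesis by (simp add: o_def)
  qed
  have refl: "dint (-x) x (\<lambda>t. K x (-t) * U t) = dint (-x) x (\<lambda>t. K x t * U (-t))"
    using dint_reflect[of x "\<lambda>t. K x t * U (-t)"] by simp
  have WU: "W t = U t - U (-t)" if "t \<in> ?S" for t
    unfolding W_def U_def by (rule dint_split0[OF cu]) (use that sub a_pos in auto)
  have KW: "dint (-x) x (\<lambda>t. K x t * W t) = dint (-x) x (\<lambda>t. K x t * U t) - dint (-x) x (\<lambda>t. K x t * U (-t))"
  proof -
    have "dint (-x) x (\<lambda>t. K x t * W t) = dint (-x) x (\<lambda>t. K x t * U t - K x t * U (-t))"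
      by (rule dint_cong) (simp add: minmax_sym WU algebra_simps)
    also have "\<dots> = dint (-x) x (\<lambda>t. K x t * U t) - dint (-x) x (\<lambda>t. K x t * U (-t))"
      by (rule dint_diff) (auto simp: minmax_sym intro!: continuous_intros cKl cUS cUr)
    finally show ?thesis .
  qed
  have PW: "dint (-x) x (\<lambda>t. P t * u t) = dint (-x) x (\<lambda>t. K x t * W t)"
    using PU gU refl KW by simp
  have cW: "continuous_on ?S W"
  proof -
    have "continuous_on ?S (\<lambda>t. U t - U (-t))" by (intro continuous_intros cUS cUr)
    then show ?thesis by (rule continuous_on_cong[THEN iffD1, rotated 2]) (use WU in auto)
  qed
  have bK_eq: "bK K h x t * u t = h / 2 * u t + K x t * u t + h / 2 * (P t * u t)" for t
    by (simp add: bK_def P_def g_def algebra_simps)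
  have "bT K h u x = u x + dint (-x) x (\<lambda>t. h / 2 * u t + K x t * u t + h / 2 * (P t * u t))"
    by (simp add: bT_def bK_eq)
  also have "dint (-x) x (\<lambda>t. h / 2 * u t + K x t * u t + h / 2 * (P t * u t))
      = h / 2 * W x + dint (-x) x (\<lambda>t. K x t * u t) + h / 2 * dint (-x) x (\<lambda>t. P t * u t)"
    by (subst dint_add, (auto simp: minmax_sym intro!: continuous_intros cKl cuS cP)[2])+
       (simp only: dint_cmult W_def)
  also have "dint (-x) x (\<lambda>t. P t * u t) = dint (-x) x (\<lambda>t. K x t * W t)" by (rule PW)
  also have "u x + (h / 2 * W x + dint (-x) x (\<lambda>t. K x t * u t) + h / 2 * dint (-x) x (\<lambda>t. K x t * W t))
      = T0 (\<lambda>t. u t + h / 2 * W t) x"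
  proof -
    have "dint (-x) x (\<lambda>t. K x t * (u t + h / 2 * W t)) = dint (-x) x (\<lambda>t. K x t * u t + h / 2 * (K x t * W t))"
      by (simp add: algebra_simps)
    also have "\<dots> = dint (-x) x (\<lambda>t. K x t * u t) + h / 2 * dint (-x) x (\<lambda>t. K x t * W t)"
    proof -
      have c1: "continuous_on {min (- x) x..max (- x) x} (\<lambda>t. K x t * u t)"
        unfolding minmax_sym by (intro continuous_intros cKl cuS)
      have c2: "continuous_on {min (- x) x..max (- x) x} (\<lambda>t. h / 2 * (K x t * W t))"
        unfolding minmax_sym by (intro continuous_intros cKl cW)
      show ?thesis using dint_add[OF c1 c2] by (simp only: dint_cmult)
    qed
    finally show ?thesis unfolding T0_def Gint_def by simp
  qed
  finally show ?thesis unfolding W_def .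
qed

end




context kern
begin

lemma transmute:
  fixes u u1 u2 :: "real \<Rightarrow> complex"
  assumes ud1: "\<And>x. x \<in> {-a..a} \<Longrightarrow> (u has_vector_derivative u1 x) (at x within {-a..a})"
    and ud2: "\<And>x. x \<in> {-a..a} \<Longrightarrow> (u1 has_vector_derivative u2 x) (at x within {-a..a})"
    and cu2: "continuous_on {-a..a} u2"
  obtains D1 D2 where "\<And>x. x \<in> {-a..a} \<Longrightarrow> (bT K h u has_vector_derivative D1 x) (at x within {-a..a})"
    "\<And>x. x \<in> {-a..a} \<Longrightarrow> (D1 has_vector_derivative D2 x) (at x within {-a..a})"
    "\<And>x. x \<in> {-a..a} \<Longrightarrow> - D2 x + q x * bT K h u x = bT K h (\<lambda>t. - u2 t) x"
    "D1 0 = u1 0 + h * u 0"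
proof -
  have cu: "continuous_on {-a..a} u" by (rule deriv_cont[OF ud1])
  have cu1: "continuous_on {-a..a} u1" by (rule deriv_cont[OF ud2])
  define v where "v = (\<lambda>t. u t + h / 2 * dint (-t) t u)"
  define v1 where "v1 = (\<lambda>t. u1 t + h / 2 * (u t + u (-t)))"
  define v2 where "v2 = (\<lambda>t. u2 t + h / 2 * (u1 t - u1 (-t)))"
  have vd1: "(v has_vector_derivative v1 x) (at x within {-a..a})" if x: "x \<in> {-a..a}" for x
  proof -
    have "((\<lambda>t. dint (-t) t u) has_vector_derivative u x + u (-x)) (at x within {-a..a})"
      by (rule dint_sym_deriv[OF cu x])
    then show ?thesis unfolding v_def v1_def by (intro derivative_intros ud1 x)
  qed
  have vd2: "(v1 has_vector_derivative v2 x) (at x within {-a..a})" if x: "x \<in> {-a..a}" for x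
  proof -
    have "((\<lambda>t. u1 t + h / 2 * (u t + u (-t))) has_vector_derivative u2 x + h / 2 * (u1 x + - u1 (-x))) (at x within {-a..a})"
      by (intro derivative_intros ud1 ud2 x refl_deriv[OF ud1 x])
    then show ?thesis unfolding v1_def v2_def by simp
  qed
  have cv2: "continuous_on {-a..a} v2"
    unfolding v2_def by (intro continuous_intros cu2 cu1 cont_refl1)
  define D1 where "D1 = (\<lambda>x. v1 x + Gint Kx v x x + dint 0 x q / 2 * v x)"
  define D2 where "D2 = (\<lambda>x. v2 x + Gint Kxx v x x + Kx x x * v x + Kx x (-x) * v (-x) + q x / 2 * v x + dint 0 x q / 2 * v1 x)"
  have TT1: "\<And>x. x \<in> {-a..a} \<Longrightarrow> (T0 v has_vector_derivative D1 x) (at x within {-a..a})"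
    using T0_transmute(1)[OF vd1 vd2 cv2] unfolding D1_def by blast
  have TT2: "\<And>x. x \<in> {-a..a} \<Longrightarrow> (D1 has_vector_derivative D2 x) (at x within {-a..a})"
    using T0_transmute(2)[OF vd1 vd2 cv2] unfolding D1_def D2_def by blast
  have TT3: "\<And>x. x \<in> {-a..a} \<Longrightarrow> - D2 x + q x * T0 v x = T0 (\<lambda>t. - v2 t) x"
    using T0_transmute(3)[OF vd1 vd2 cv2] unfolding D2_def by blast
  have eq: "bT K h u x = T0 v x" if "x \<in> {-a..a}" for x
    unfolding v_def by (rule bT_eq[OF cu that])
  show ?thesis
  proof (rule that[of D1 D2])
    fix x assume x: "x \<in> {-a..a}"
    show "(bT K h u has_vector_derivative D1 x) (at x within {-a..a})"
      by (rule has_vector_derivative_transform_within[OF TT1[OF x], where d=1]) (use x eq in auto)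
    show "(D1 has_vector_derivative D2 x) (at x within {-a..a})" by (rule TT2[OF x])
    have cnu2: "continuous_on {-a..a} (\<lambda>t. - u2 t)" by (intro continuous_intros cu2)
    have "bT K h (\<lambda>t. - u2 t) x = T0 (\<lambda>t. - u2 t + h / 2 * dint (-t) t (\<lambda>s. - u2 s)) x"
      by (rule bT_eq[OF cnu2 x])
    also have "\<dots> = T0 (\<lambda>t. - v2 t) x"
    proof (rule T0_cong[OF _ x])
      fix t assume t: "t \<in> {-a..a}"
      have sub: "{min (-t) t..max (-t) t} \<subseteq> {-a..a}" using t by (auto simp: min_def max_def)
      have D: "dint (-t) t u2 = u1 t - u1 (-t)"
      proof (rule dint_FTC)
        fix s assume s: "s \<in> {min (-t) t..max (-t) t}"
        show "(u1 has_vector_derivative u2 s) (at s within {min (-t) t..max (-t) t})"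
          by (rule has_vector_derivative_within_subset[OF ud2 sub]) (use s sub in auto)
      qed
      show "- u2 t + h / 2 * dint (-t) t (\<lambda>s. - u2 s) = - v2 t"
        unfolding dint_neg D by (simp add: v2_def algebra_simps)
    qed
    finally have R: "bT K h (\<lambda>t. - u2 t) x = T0 (\<lambda>t. - v2 t) x" .
    show "- D2 x + q x * bT K h u x = bT K h (\<lambda>t. - u2 t) x"
      unfolding R eq[OF x] by (rule TT3[OF x])
  next
    show "D1 0 = u1 0 + h * u 0"
      by (simp add: D1_def v1_def v_def Gint_def)
  qed
qed

lemma bT_cmult: "bT K h (\<lambda>t. c * u t) x = c * bT K h u x"
proof -
  have "(\<lambda>t. bK K h x t * (c * u t)) = (\<lambda>t. c * (bK K h x t * u t))" by (auto simp: algebra_simps)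
  then show ?thesis by (simp add: bT_def dint_cmult algebra_simps)
qed

end




lemma vd_inverse:
  fixes f :: "real \<Rightarrow> complex"
  assumes "(f has_vector_derivative f') (at x within S)" "f x \<noteq> 0"
  shows "((\<lambda>x. inverse (f x)) has_vector_derivative - (f' / (f x)^2)) (at x within S)"
proof -
  have "((\<lambda>x. inverse (f x)) has_derivative (\<lambda>h. - (inverse (f x) * (h *\<^sub>R f') * inverse (f x)))) (at x within S)"
    using Deriv.has_derivative_inverse[OF assms(2) assms(1)[unfolded has_vector_derivative_def]] .
  moreover have "(\<lambda>h. - (inverse (f x) * (h *\<^sub>R f') * inverse (f x))) = (\<lambda>h. h *\<^sub>R (- (f' / (f x)^2)))"
    using assms(2) by (auto simp: scaleR_conv_of_real field_simps power2_eq_square)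
  ultimately show ?thesis by (simp add: has_vector_derivative_def)
qed

lemma zero_const:
  fixes g :: "real \<Rightarrow> complex"
  assumes "\<And>x. x \<in> {-a..a} \<Longrightarrow> (g has_vector_derivative 0) (at x within {-a..a})"
    and "x \<in> {-a..a}" "y \<in> {-a..a}"
  shows "g x = g y"
proof -
  have "\<exists>c. \<forall>x\<in>{-a..a}. g x = c"
    by (rule has_derivative_zero_constant) (use assms(1) in \<open>auto simp: has_vector_derivative_def\<close>)
  then show ?thesis using assms by auto
qed

locale fsol =
  fixes a :: real and q f f' f'' :: "real \<Rightarrow> complex"
  assumes a_pos: "a > 0"
    and qc: "continuous_on {-a..a} q"
    and fd1: "\<And>x. x \<in> {-a..a} \<Longrightarrow> (f has_vector_derivative f' x) (at x within {-a..a})"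
    and fd2: "\<And>x. x \<in> {-a..a} \<Longrightarrow> (f' has_vector_derivative f'' x) (at x within {-a..a})"
    and ode: "\<And>x. x \<in> {-a..a} \<Longrightarrow> f'' x = q x * f x"
    and fnz: "\<And>x. x \<in> {-a..a} \<Longrightarrow> f x \<noteq> 0"
    and f0: "f 0 = 1"
begin

lemma cf: "continuous_on {-a..a} f" by (rule deriv_cont[OF fd1])
lemma cf1: "continuous_on {-a..a} f'" by (rule deriv_cont[OF fd2])

lemma zero_in: "0 \<in> {-a..a}" using a_pos by auto

lemma unique0:
  fixes y y1 y2 :: "real \<Rightarrow> complex"
  assumes yd1: "\<And>x. x \<in> {-a..a} \<Longrightarrow> (y has_vector_derivative y1 x) (at x within {-a..a})"
    and yd2: "\<And>x. x \<in> {-a..a} \<Longrightarrow> (y1 has_vector_derivative y2 x) (at x within {-a..a})"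
    and yode: "\<And>x. x \<in> {-a..a} \<Longrightarrow> y2 x = q x * y x"
    and y0: "y 0 = 0" and y10: "y1 0 = 0"
    and x: "x \<in> {-a..a}"
  shows "y x = 0"
proof -
  have Wd: "((\<lambda>x. f x * y1 x - f' x * y x) has_vector_derivative 0) (at x within {-a..a})"
    if x: "x \<in> {-a..a}" for x
  proof -
    have "((\<lambda>x. f x * y1 x - f' x * y x) has_vector_derivative
        (f x * y2 x + f' x * y1 x) - (f' x * y1 x + f'' x * y x)) (at x within {-a..a})"
      by (intro has_vector_derivative_diff has_vector_derivative_mult fd1 fd2 yd1 yd2 x)
    moreover have "(f x * y2 x + f' x * y1 x) - (f' x * y1 x + f'' x * y x) = 0"
      using ode[OF x] yode[OF x] by (simp add: algebra_simps)
    ultimately show ?thesis by simp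
  qed
  have W0: "f x * y1 x - f' x * y x = 0" if x: "x \<in> {-a..a}" for x
  proof -
    have "f x * y1 x - f' x * y x = f 0 * y1 0 - f' 0 * y 0"
      by (rule zero_const[where g="\<lambda>x. f x * y1 x - f' x * y x", OF Wd x zero_in])
    then show ?thesis using y0 y10 by simp
  qed
  have Qd: "((\<lambda>x. y x * inverse (f x)) has_vector_derivative 0) (at x within {-a..a})"
    if x: "x \<in> {-a..a}" for x
  proof -
    have "((\<lambda>x. y x * inverse (f x)) has_vector_derivative y x * - (f' x / (f x)^2) + y1 x * inverse (f x))
        (at x within {-a..a})"
      by (intro has_vector_derivative_mult yd1 vd_inverse fd1 fnz x)
    moreover have "y x * - (f' x / (f x)^2) + y1 x * inverse (f x) = 0"
    proof -
      have "y x * - (f' x / (f x)^2) + y1 x * inverse (f x) = (f x * y1 x - f' x * y x) / (f x)^2"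
        using fnz[OF x] by (simp add: field_simps power2_eq_square)
      then show ?thesis using W0[OF x] by simp
    qed
    ultimately show ?thesis by simp
  qed
  have "y x * inverse (f x) = y 0 * inverse (f 0)"
    by (rule zero_const[where g="\<lambda>x. y x * inverse (f x)", OF Qd x zero_in])
  then show ?thesis using y0 fnz[OF x] by simp
qed

definition Y :: "nat \<Rightarrow> real \<Rightarrow> complex" where
  "Y n x = (if odd n then X f 0 n x else Xt f 0 n x)"
definition Z :: "nat \<Rightarrow> real \<Rightarrow> complex" where
  "Z n x = (if even n then X f 0 n x else Xt f 0 n x)"

lemma Y0: "Y 0 x = 1" and Z0: "Z 0 x = 1" by (simp_all add: Y_def Z_def)

lemma YS: "Y (Suc n) x = of_nat (Suc n) * dint 0 x (\<lambda>s. Z n s * inverse ((f s)^2))"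
  by (cases "even n") (simp_all add: Y_def Z_def)

lemma ZS: "Z (Suc n) x = of_nat (Suc n) * dint 0 x (\<lambda>s. Y n s * (f s)^2)"
  by (cases "even n") (simp_all add: Y_def Z_def)

lemma phi_Y: "phi f 0 k x = f x * Y k x" by (simp add: phi_def Y_def)

definition DY :: "nat \<Rightarrow> real \<Rightarrow> complex" where
  "DY n x = (case n of 0 \<Rightarrow> 0 | Suc m \<Rightarrow> of_nat (Suc m) * Z m x * inverse ((f x)^2))"
definition DZ :: "nat \<Rightarrow> real \<Rightarrow> complex" where
  "DZ n x = (case n of 0 \<Rightarrow> 0 | Suc m \<Rightarrow> of_nat (Suc m) * Y m x * (f x)^2)"

lemma cinvf2: "continuous_on {-a..a} (\<lambda>s. inverse ((f s)^2))"
  by (intro continuous_intros cf) (use fnz in auto)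

lemma YZ_deriv:
  "\<forall>x\<in>{-a..a}. (Y n has_vector_derivative DY n x) (at x within {-a..a}) \<and>
                (Z n has_vector_derivative DZ n x) (at x within {-a..a})"
proof (induction n)
  case 0
  have "Y 0 = (\<lambda>x. 1)" "Z 0 = (\<lambda>x. 1)" by (auto simp: Y0 Z0)
  then show ?case by (auto simp: DY_def DZ_def)
next
  case (Suc n)
  have cY: "continuous_on {-a..a} (Y n)" by (rule deriv_cont) (use Suc in blast)
  have cZ: "continuous_on {-a..a} (Z n)" by (rule deriv_cont) (use Suc in blast)
  show ?case
  proof (intro ballI conjI)
    fix x assume x: "x \<in> {-a..a}"
    have c1: "continuous_on {-a..a} (\<lambda>s. Z n s * inverse ((f s)^2))" by (intro continuous_intros cZ cinvf2)
    have "((\<lambda>x. of_nat (Suc n) * dint 0 x (\<lambda>s. Z n s * inverse ((f s)^2))) has_vector_derivative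
          of_nat (Suc n) * (Z n x * inverse ((f x)^2))) (at x within {-a..a})"
      by (intro derivative_intros dint_deriv[OF c1 zero_in x])
    then show "(Y (Suc n) has_vector_derivative DY (Suc n) x) (at x within {-a..a})"
      by (simp add: YS[abs_def] DY_def mult.assoc)
    have c2: "continuous_on {-a..a} (\<lambda>s. Y n s * (f s)^2)" by (intro continuous_intros cY cf)
    have "((\<lambda>x. of_nat (Suc n) * dint 0 x (\<lambda>s. Y n s * (f s)^2)) has_vector_derivative
          of_nat (Suc n) * (Y n x * (f x)^2)) (at x within {-a..a})"
      by (intro derivative_intros dint_deriv[OF c2 zero_in x])
    then show "(Z (Suc n) has_vector_derivative DZ (Suc n) x) (at x within {-a..a})"
      by (simp add: ZS[abs_def] DZ_def mult.assoc)
  qed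
qed

lemma Yd: "x \<in> {-a..a} \<Longrightarrow> (Y n has_vector_derivative DY n x) (at x within {-a..a})"
  using YZ_deriv by blast
lemma Zd: "x \<in> {-a..a} \<Longrightarrow> (Z n has_vector_derivative DZ n x) (at x within {-a..a})"
  using YZ_deriv by blast

lemma Y_at0: "Y (Suc n) 0 = 0" by (simp add: YS)
lemma Z_at0: "Z (Suc n) 0 = 0" by (simp add: ZS)

lemma phi_C2:
  obtains P1 P2 where
    "\<And>x. x \<in> {-a..a} \<Longrightarrow> (phi f 0 k has_vector_derivative P1 x) (at x within {-a..a})"
    "\<And>x. x \<in> {-a..a} \<Longrightarrow> (P1 has_vector_derivative P2 x) (at x within {-a..a})"
    "\<And>x. x \<in> {-a..a} \<Longrightarrow> P2 x = q x * phi f 0 k x + of_nat (k * (k - 1)) * phi f 0 (k - 2) x"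
    "P1 0 = (if k = 0 then f' 0 else if k = 1 then 1 else 0)"
proof (cases k)
  case 0
  have "phi f 0 k = f" using 0 by (auto simp: phi_Y Y0)
  show ?thesis
  proof (rule that[of f' f''])
    show "\<And>x. x \<in> {-a..a} \<Longrightarrow> (phi f 0 k has_vector_derivative f' x) (at x within {-a..a})"
      using fd1 \<open>phi f 0 k = f\<close> by simp
  qed (use fd2 ode 0 \<open>phi f 0 k = f\<close> in auto)
next
  case (Suc n)
  define P1 where "P1 = (\<lambda>x. f' x * Y k x + of_nat k * (Z n x * inverse (f x)))"
  define P2 where "P2 = (\<lambda>x. f'' x * Y k x + of_nat k * DZ n x * inverse (f x))"
  show ?thesis
  proof (rule that[of P1 P2])
    fix x assume x: "x \<in> {-a..a}"
    have "(phi f 0 k has_vector_derivative f x * DY k x + f' x * Y k x) (at x within {-a..a})"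
      unfolding phi_Y[abs_def] by (intro has_vector_derivative_mult fd1 Yd x)
    moreover have "f x * DY k x + f' x * Y k x = P1 x"
      using fnz[OF x] by (simp add: Suc DY_def P1_def field_simps power2_eq_square)
    ultimately show "(phi f 0 k has_vector_derivative P1 x) (at x within {-a..a})" by simp
    have "(P1 has_vector_derivative (f' x * DY k x + f'' x * Y k x) +
          of_nat k * (Z n x * - (f' x / (f x)^2) + DZ n x * inverse (f x))) (at x within {-a..a})"
      unfolding P1_def
      by (intro has_vector_derivative_add has_vector_derivative_mult has_vector_derivative_mult_right
          fd1 fd2 Yd Zd vd_inverse fnz x)
    moreover have "(f' x * DY k x + f'' x * Y k x) +
          of_nat k * (Z n x * - (f' x / (f x)^2) + DZ n x * inverse (f x)) = P2 x"
      using fnz[OF x] by (simp add: Suc DY_def P2_def field_simps power2_eq_square)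
    ultimately show "(P1 has_vector_derivative P2 x) (at x within {-a..a})" by simp
    show "P2 x = q x * phi f 0 k x + of_nat (k * (k - 1)) * phi f 0 (k - 2) x"
    proof (cases n)
      case 0
      then show ?thesis using Suc by (simp add: P2_def DZ_def ode[OF x] phi_Y)
    next
      case (Suc m)
      have "P2 x = q x * (f x * Y k x) + of_nat k * of_nat (Suc m) * (f x * Y m x)"
        using fnz[OF x] \<open>k = Suc n\<close> Suc
        by (simp add: P2_def DZ_def ode[OF x] field_simps power2_eq_square)
      then show ?thesis using \<open>k = Suc n\<close> Suc by (simp add: phi_Y algebra_simps)
    qed
  next
    show "P1 0 = (if k = 0 then f' 0 else if k = 1 then 1 else 0)"
      using Suc by (cases n) (simp_all add: P1_def Y_at0 Z0 Z_at0 f0)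
  qed
qed

end




lemma pow_deriv:
  "((\<lambda>t. (complex_of_real t) ^ k) has_vector_derivative of_nat k * (complex_of_real x) ^ (k - 1)) (at x within S)"
proof -
  have "((\<lambda>t. t ^ k) has_field_derivative real k * x ^ (k - 1)) (at x within S)"
    using DERIV_pow[of k x S] by simp
  from has_vector_derivative_of_real[OF this]
  show ?thesis by simp
qed

lemma pow_deriv2:
  "((\<lambda>t. of_nat k * (complex_of_real t) ^ (k - 1)) has_vector_derivative of_nat (k * (k - 1)) * (complex_of_real x) ^ (k - 2)) (at x within S)"
proof -
  have "((\<lambda>t. of_nat k * (complex_of_real t) ^ (k - 1)) has_vector_derivative of_nat k * (of_nat (k - 1) * (complex_of_real x) ^ (k - 1 - 1))) (at x within S)"
    by (intro has_vector_derivative_mult_right pow_deriv)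
  moreover have "k - 1 - 1 = k - 2" by simp
  ultimately show ?thesis by (simp add: mult.assoc)
qed

theorem mainTheorem4:
  fixes a :: real
    and q q' f f' f'' :: "real \<Rightarrow> complex"
    and K Kx Kt Kxx Kxt Ktt :: "real \<Rightarrow> real \<Rightarrow> complex"
  assumes a_pos: "a > 0"
    and q_C1: "\<forall>x\<in>{-a..a}. (q has_vector_derivative q' x) (at x within {-a..a})"
              "continuous_on {-a..a} q'"
    and f_C2: "\<forall>x\<in>{-a..a}. (f has_vector_derivative f' x) (at x within {-a..a})"
              "\<forall>x\<in>{-a..a}. (f' has_vector_derivative f'' x) (at x within {-a..a})"
              "continuous_on {-a..a} f''"
    and f_ode: "\<forall>x\<in>{-a..a}. f'' x - q x * f x = 0"
    and f_nz: "\<forall>x\<in>{-a..a}. f x \<noteq> 0"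
    and f0: "f 0 = 1"
    and K_dx: "\<forall>(x, t)\<in>Omega a.
          ((\<lambda>y. K y t) has_vector_derivative Kx x t) (at x within {y. (y, t) \<in> Omega a})"
    and K_dt: "\<forall>(x, t)\<in>Omega a.
          ((\<lambda>s. K x s) has_vector_derivative Kt x t) (at t within {s. (x, s) \<in> Omega a})"
    and K_dxx: "\<forall>(x, t)\<in>Omega a.
          ((\<lambda>y. Kx y t) has_vector_derivative Kxx x t) (at x within {y. (y, t) \<in> Omega a})"
    and K_dxt: "\<forall>(x, t)\<in>Omega a.
          ((\<lambda>s. Kx x s) has_vector_derivative Kxt x t) (at t within {s. (x, s) \<in> Omega a})"
    and K_dtt: "\<forall>(x, t)\<in>Omega a.
          ((\<lambda>s. Kt x s) has_vector_derivative Ktt x t) (at t within {s. (x, s) \<in> Omega a})"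
    and K_cont: "continuous_on (Omega a) (\<lambda>p. K (fst p) (snd p))"
                "continuous_on (Omega a) (\<lambda>p. Kx (fst p) (snd p))"
                "continuous_on (Omega a) (\<lambda>p. Kt (fst p) (snd p))"
                "continuous_on (Omega a) (\<lambda>p. Kxx (fst p) (snd p))"
                "continuous_on (Omega a) (\<lambda>p. Kxt (fst p) (snd p))"
                "continuous_on (Omega a) (\<lambda>p. Ktt (fst p) (snd p))"
    and K_pde: "\<forall>(x, t)\<in>Omega a. Kxx x t - q x * K x t = Ktt x t"
    and K_diag: "\<forall>x\<in>{-a..a}. K x x = dint 0 x q / 2"
    and K_antidiag: "\<forall>x\<in>{-a..a}. K x (- x) = 0"
  shows "(\<forall>k::nat. \<forall>x\<in>{-a..a}.
            bT K (f' 0) (\<lambda>t. (complex_of_real t) ^ k) x = phi f 0 k x)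
       \<and> (\<forall>u u' u'' :: real \<Rightarrow> complex.
            (\<forall>x\<in>{-a..a}. (u has_vector_derivative u' x) (at x within {-a..a})) \<and>
            (\<forall>x\<in>{-a..a}. (u' has_vector_derivative u'' x) (at x within {-a..a})) \<and>
            continuous_on {-a..a} u''
          \<longrightarrow> (\<exists>v' v'' :: real \<Rightarrow> complex.
                (\<forall>x\<in>{-a..a}. (bT K (f' 0) u has_vector_derivative v' x) (at x within {-a..a})) \<and>
                (\<forall>x\<in>{-a..a}. (v' has_vector_derivative v'' x) (at x within {-a..a})) \<and>
                (\<forall>x\<in>{-a..a}. - v'' x + q x * bT K (f' 0) u x
                                = bT K (f' 0) (\<lambda>t. - u'' t) x)))"
proof -
  have qc: "continuous_on {-a..a} q" by (rule deriv_cont) (use q_C1(1) in blast)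
  interpret kern a q K Kx Kt Kxx Ktt
  proof
    show "a > 0" by (rule a_pos)
    show "continuous_on {-a..a} q" by (rule qc)
    show "\<And>x t. (x,t) \<in> Omega a \<Longrightarrow> ((\<lambda>y. K y t) has_vector_derivative Kx x t) (at x within {y. (y,t)\<in>Omega a})"
      using K_dx by fast
    show "\<And>x t. (x,t) \<in> Omega a \<Longrightarrow> ((\<lambda>s. K x s) has_vector_derivative Kt x t) (at t within {s. (x,s)\<in>Omega a})"
      using K_dt by fast
    show "\<And>x t. (x,t) \<in> Omega a \<Longrightarrow> ((\<lambda>y. Kx y t) has_vector_derivative Kxx x t) (at x within {y. (y,t)\<in>Omega a})"
      using K_dxx by fast
    show "\<And>x t. (x,t) \<in> Omega a \<Longrightarrow> ((\<lambda>s. Kt x s) has_vector_derivative Ktt x t) (at t within {s. (x,s)\<in>Omega a})"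
      using K_dtt by fast
    show "\<And>x t. (x,t) \<in> Omega a \<Longrightarrow> Kxx x t - q x * K x t = Ktt x t"
      using K_pde by fast
    show "\<And>x. x \<in> {-a..a} \<Longrightarrow> K x x = dint 0 x q / 2" using K_diag by blast
    show "\<And>x. x \<in> {-a..a} \<Longrightarrow> K x (-x) = 0" using K_antidiag by blast
  qed (rule K_cont)+
  interpret fsol a q f f' f''
  proof
    show "a > 0" by (rule a_pos)
    show "continuous_on {-a..a} q" by (rule qc)
    show "\<And>x. x \<in> {-a..a} \<Longrightarrow> f'' x = q x * f x" using f_ode by auto
    show "\<And>x. x \<in> {-a..a} \<Longrightarrow> (f has_vector_derivative f' x) (at x within {-a..a})" using f_C2 by blast
    show "\<And>x. x \<in> {-a..a} \<Longrightarrow> (f' has_vector_derivative f'' x) (at x within {-a..a})" using f_C2 by blast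
    show "\<And>x. x \<in> {-a..a} \<Longrightarrow> f x \<noteq> 0" using f_nz by blast
    show "f 0 = 1" by (rule f0)
  qed
  have part2: "\<exists>v' v'' :: real \<Rightarrow> complex.
                (\<forall>x\<in>{-a..a}. (bT K (f' 0) u has_vector_derivative v' x) (at x within {-a..a})) \<and>
                (\<forall>x\<in>{-a..a}. (v' has_vector_derivative v'' x) (at x within {-a..a})) \<and>
                (\<forall>x\<in>{-a..a}. - v'' x + q x * bT K (f' 0) u x = bT K (f' 0) (\<lambda>t. - u'' t) x)"
    if u: "(\<forall>x\<in>{-a..a}. (u has_vector_derivative u' x) (at x within {-a..a}))"
      "(\<forall>x\<in>{-a..a}. (u' has_vector_derivative u'' x) (at x within {-a..a}))"
      "continuous_on {-a..a} u''" for u u' u'' :: "real \<Rightarrow> complex"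
  proof -
    obtain D1 D2 where D: "\<And>x. x \<in> {-a..a} \<Longrightarrow> (bT K (f' 0) u has_vector_derivative D1 x) (at x within {-a..a})"
      "\<And>x. x \<in> {-a..a} \<Longrightarrow> (D1 has_vector_derivative D2 x) (at x within {-a..a})"
      "\<And>x. x \<in> {-a..a} \<Longrightarrow> - D2 x + q x * bT K (f' 0) u x = bT K (f' 0) (\<lambda>t. - u'' t) x"
      by (rule transmute[of u u' u'' "f' 0"]) (use u in auto)
    show ?thesis by (intro exI[of _ D1] exI[of _ D2] conjI ballI D)
  qed
  have part1: "\<forall>x\<in>{-a..a}. bT K (f' 0) (\<lambda>t. (complex_of_real t) ^ k) x = phi f 0 k x" for k
  proof (induction k rule: less_induct)
    case (less k)
    define u where "u = (\<lambda>t. (complex_of_real t) ^ k)"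
    define u1 where "u1 = (\<lambda>t. of_nat k * (complex_of_real t) ^ (k - 1))"
    define u2 where "u2 = (\<lambda>t. of_nat (k * (k - 1)) * (complex_of_real t) ^ (k - 2))"
    have ud1: "\<And>x. x \<in> {-a..a} \<Longrightarrow> (u has_vector_derivative u1 x) (at x within {-a..a})"
      unfolding u_def u1_def by (rule pow_deriv)
    have ud2: "\<And>x. x \<in> {-a..a} \<Longrightarrow> (u1 has_vector_derivative u2 x) (at x within {-a..a})"
      unfolding u1_def u2_def by (rule pow_deriv2)
    have cu2: "continuous_on {-a..a} u2" unfolding u2_def by (intro continuous_intros)
    obtain D1 D2 where D: "\<And>x. x \<in> {-a..a} \<Longrightarrow> (bT K (f' 0) u has_vector_derivative D1 x) (at x within {-a..a})"
      "\<And>x. x \<in> {-a..a} \<Longrightarrow> (D1 has_vector_derivative D2 x) (at x within {-a..a})"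
      "\<And>x. x \<in> {-a..a} \<Longrightarrow> - D2 x + q x * bT K (f' 0) u x = bT K (f' 0) (\<lambda>t. - u2 t) x"
      "D1 0 = u1 0 + f' 0 * u 0"
      using transmute[OF ud1 ud2 cu2, of "f' 0"] by blast
    obtain P1 P2 where P:
      "\<And>x. x \<in> {-a..a} \<Longrightarrow> (phi f 0 k has_vector_derivative P1 x) (at x within {-a..a})"
      "\<And>x. x \<in> {-a..a} \<Longrightarrow> (P1 has_vector_derivative P2 x) (at x within {-a..a})"
      "\<And>x. x \<in> {-a..a} \<Longrightarrow> P2 x = q x * phi f 0 k x + of_nat (k * (k - 1)) * phi f 0 (k - 2) x"
      "P1 0 = (if k = 0 then f' 0 else if k = 1 then 1 else 0)"
      using phi_C2[of k] by blast
    define y where "y = (\<lambda>x. bT K (f' 0) u x - phi f 0 k x)"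
    have yd1: "(y has_vector_derivative D1 x - P1 x) (at x within {-a..a})" if "x \<in> {-a..a}" for x
      unfolding y_def by (intro has_vector_derivative_diff D(1) P(1) that)
    have yd2: "((\<lambda>x. D1 x - P1 x) has_vector_derivative D2 x - P2 x) (at x within {-a..a})" if "x \<in> {-a..a}" for x
      by (intro has_vector_derivative_diff D(2) P(2) that)
    have yode: "D2 x - P2 x = q x * y x" if x: "x \<in> {-a..a}" for x
    proof -
      have neg: "(\<lambda>t. - u2 t) = (\<lambda>t. (- of_nat (k * (k - 1))) * (complex_of_real t) ^ (k - 2))"
        by (auto simp: u2_def)
      have B: "bT K (f' 0) (\<lambda>t. - u2 t) x = - of_nat (k * (k - 1)) * phi f 0 (k - 2) x"
      proof (cases "k < 2")
        case True
        then have "k * (k - 1) = 0" by (cases k) auto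
        then show ?thesis unfolding neg bT_cmult by simp
      next
        case False
        then have "k - 2 < k" by simp
        from less[OF this] x have "bT K (f' 0) (\<lambda>t. (complex_of_real t) ^ (k - 2)) x = phi f 0 (k - 2) x" by blast
        then show ?thesis unfolding neg bT_cmult by simp
      qed
      have E1: "D2 x = q x * bT K (f' 0) u x + of_nat (k * (k - 1)) * phi f 0 (k - 2) x"
        using D(3)[OF x] B by (simp add: algebra_simps)
      have "D2 x - P2 x = q x * bT K (f' 0) u x - q x * phi f 0 k x"
        unfolding E1 P(3)[OF x] by simp
      then show ?thesis by (simp add: y_def right_diff_distrib)
    qed
    have y0: "y 0 = 0"
    proof -
      have "bT K (f' 0) u 0 = u 0" by (simp add: bT_def)
      moreover have "phi f 0 k 0 = (if k = 0 then 1 else 0)"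
        by (cases k) (simp_all add: phi_Y Y0 Y_at0 f0)
      ultimately show ?thesis by (simp add: y_def u_def)
    qed
    have y10: "D1 0 - P1 0 = 0"
      using D(4) P(4) by (cases k) (auto simp: u1_def u_def)
    show ?case
    proof
      fix x assume x: "x \<in> {-a..a}"
      have "y x = 0" by (rule unique0[OF yd1 yd2 yode y0 y10 x])
      then show "bT K (f' 0) (\<lambda>t. (complex_of_real t) ^ k) x = phi f 0 k x"
        by (simp add: y_def u_def)
    qed
  qed
  show ?thesis using part1 part2 by blast
qed


end
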